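(* For all integers $m,n\ge 1$, the independence polynomial $I_{T^*_{3,m,n}}(t)$ of the tree $T^*_{3,m,n}$ is unimodal.
   Context: For a finite simple graph $G$, let $i_k$ be the number of independent sets of $G$ of size $k$ ($i_0=1$), and $I_G(t)=\sum_{k\ge 0} i_k t^k$ its independence polynomial. A polynomial is unimodal if its coefficient sequence $a_0,\dots,a_N$ satisfies $a_0\le\cdots\le a_j\ge a_{j+1}\ge\cdots\ge a_N$ for some $j$. The tree $T_{3,m,n}$ has a root $v_0$ with three children $v_1,v_2,v_3$; $v_1$ has children $v_{11},v_{12},v_{13}$, $v_2$ has children $v_{21},\dots,v_{2m}$, $v_3$ has children $v_{31},\dots,v_{3n}$, and each $v_{ij}$ has exactly one child $v'_{ij}$ (a leaf). The tree $T^*_{3,m,n}$ is obtained from $T_{3,m,n}$ by adding two new vertices $x,y$ and edges $v'_{13}x$ and $xy$ (i.e. the edge $v_{13}v'_{13}$ is replaced by a path $v_{13}v'_{13}xy$ on four vertices). *)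

theory Defs
  imports "HOL-Computational_Algebra.Polynomial"
begin

definition simple_graph :: "'a set \<Rightarrow> 'a set set \<Rightarrow> bool" where
  "simple_graph V E \<longleftrightarrow> finite V \<and> (\<forall>e\<in>E. e \<subseteq> V \<and> card e = 2)"

definition independent_set :: "'a set \<Rightarrow> 'a set set \<Rightarrow> 'a set \<Rightarrow> bool" where
  "independent_set V E S \<longleftrightarrow> S \<subseteq> V \<and> (\<forall>e\<in>E. \<not> e \<subseteq> S)"

definition indep_poly :: "'a set \<Rightarrow> 'a set set \<Rightarrow> nat poly" where
  "indep_poly V E = (\<Sum>S\<in>{S. independent_set V E S}. monom 1 (card S))"

definition unimodal :: "nat poly \<Rightarrow> bool" where
  "unimodal p \<longleftrightarrow> (\<exists>j. (\<forall>i<j. coeff p i \<le> coeff p (Suc i)) \<and>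
                       (\<forall>i. j \<le> i \<and> i < degree p \<longrightarrow> coeff p (Suc i) \<le> coeff p i))"

text \<open>Vertices of the trees: root v0, Mid i = v_i, Ch i j = v_ij, Lf i j = v'_ij,
and the extra vertices x, y of T*.\<close>

datatype tvert = Root | Mid nat | Ch nat nat | Lf nat nat | VX | VY

definition child_idx :: "nat \<Rightarrow> nat \<Rightarrow> (nat \<times> nat) set" where
  "child_idx m n = {(1, j) | j. j \<in> {1..3}} \<union> {(2, j) | j. j \<in> {1..m}} \<union> {(3, j) | j. j \<in> {1..n}}"

definition T3_verts :: "nat \<Rightarrow> nat \<Rightarrow> tvert set" where
  "T3_verts m n = {Root} \<union> Mid ` {1,2,3} \<union> (\<lambda>(i,j). Ch i j) ` child_idx m n
                    \<union> (\<lambda>(i,j). Lf i j) ` child_idx m n"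

definition T3_edges :: "nat \<Rightarrow> nat \<Rightarrow> tvert set set" where
  "T3_edges m n = (\<lambda>i. {Root, Mid i}) ` {1,2,3}
                  \<union> (\<lambda>(i,j). {Mid i, Ch i j}) ` child_idx m n
                  \<union> (\<lambda>(i,j). {Ch i j, Lf i j}) ` child_idx m n"

definition T3star_verts :: "nat \<Rightarrow> nat \<Rightarrow> tvert set" where
  "T3star_verts m n = T3_verts m n \<union> {VX, VY}"

definition T3star_edges :: "nat \<Rightarrow> nat \<Rightarrow> tvert set set" where
  "T3star_edges m n = T3_edges m n \<union> {{Lf 1 3, VX}, {VX, VY}}"

end

theory Submission
  imports Defs
begin


lemma monom_shift: "monom (1::nat) (Suc k) = [:0,1:] * monom 1 k"
  by (simp add: poly_eq_iff coeff_monom coeff_pCons split: nat.split)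

lemma finite_indep: "finite V \<Longrightarrow> finite {S. independent_set V E S}"
  unfolding independent_set_def by (rule finite_subset[of _ "Pow V"]) auto

lemma indep_poly_empty:
  assumes "\<forall>e\<in>E. card e = 2"
  shows "indep_poly {} E = 1"
proof -
  have "{S. independent_set {} E S} = {{}}"
    using assms unfolding independent_set_def by force
  thus ?thesis unfolding indep_poly_def by (simp add: monom_0 one_pCons)
qed

lemma indep_poly_delete:
  assumes fin: "finite V" and v: "v \<in> V" and E2: "\<forall>e\<in>E. card e = 2"
  shows "indep_poly V E = indep_poly (V - {v}) E + [:0,1:] * indep_poly (V - {v} - {u. {v,u} \<in> E}) E"
proof -
  define W where "W = V - {v} - {u. {v,u} \<in> E}"
  define S0 where "S0 = {S. independent_set (V - {v}) E S}"
  define S1 where "S1 = {S. independent_set W E S}"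
  have f0: "finite S0" unfolding S0_def using fin by (intro finite_indep) auto
  have f1: "finite S1" unfolding S1_def W_def using fin by (intro finite_indep) auto
  have vW: "v \<notin> W" unfolding W_def by auto
  have split: "{S. independent_set V E S} = S0 \<union> insert v ` S1"
  proof (intro equalityI subsetI)
    fix S assume "S \<in> {S. independent_set V E S}"
    hence SV: "S \<subseteq> V" and ind: "\<forall>e\<in>E. \<not> e \<subseteq> S" unfolding independent_set_def by auto
    show "S \<in> S0 \<union> insert v ` S1"
    proof (cases "v \<in> S")
      case False
      hence "S \<in> S0" unfolding S0_def independent_set_def using SV ind by auto
      thus ?thesis by simp
    next
      case True
      have sub: "S - {v} \<subseteq> W" unfolding W_def
      proof
        fix u assume u: "u \<in> S - {v}"
        have "{v,u} \<notin> E" using ind True u by auto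
        thus "u \<in> V - {v} - {u. {v, u} \<in> E}" using u SV by auto
      qed
      have "\<forall>e\<in>E. \<not> e \<subseteq> S - {v}" using ind by auto
      hence "S - {v} \<in> S1" unfolding S1_def independent_set_def using sub by auto
      moreover have "S = insert v (S - {v})" using True by auto
      ultimately show ?thesis by blast
    qed
  next
    fix S assume "S \<in> S0 \<union> insert v ` S1"
    thus "S \<in> {S. independent_set V E S}"
    proof
      assume "S \<in> S0" thus ?thesis unfolding S0_def independent_set_def by auto
    next
      assume "S \<in> insert v ` S1"
      then obtain S' where S': "S = insert v S'" "S' \<in> S1" by auto
      have S'W: "S' \<subseteq> W" and ind: "\<forall>e\<in>E. \<not> e \<subseteq> S'" using S' unfolding S1_def independent_set_def by auto
      have "\<not> e \<subseteq> insert v S'" if e: "e \<in> E" for e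
      proof
        assume sub: "e \<subseteq> insert v S'"
        show False
        proof (cases "v \<in> e")
          case False thus False using sub ind e by auto
        next
          case True
          obtain x y where xy: "e = {x,y}" "x \<noteq> y" using E2 e by (auto simp: card_2_iff)
          obtain u where u: "e = {v,u}" "u \<noteq> v" using True xy by auto
          have "u \<in> S'" using sub u by auto
          hence "u \<in> W" using S'W by auto
          thus False using u e unfolding W_def by auto
        qed
      qed
      moreover have "S \<subseteq> V" using S' S'W v unfolding W_def by auto
      ultimately show ?thesis unfolding independent_set_def S' by auto
    qed
  qed
  have disj: "S0 \<inter> insert v ` S1 = {}" unfolding S0_def independent_set_def by auto
  have inj: "inj_on (insert v) S1"
  proof (rule inj_onI)
    fix A B assume "A \<in> S1" "B \<in> S1" "insert v A = insert v B"
    moreover have "v \<notin> A" "v \<notin> B" using \<open>A \<in> S1\<close> \<open>B \<in> S1\<close> vW unfolding S1_def independent_set_def by auto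
    ultimately show "A = B" by (metis insert_ident)
  qed
  have "indep_poly V E = (\<Sum>S\<in>S0. monom 1 (card S)) + (\<Sum>S\<in>insert v ` S1. monom 1 (card S))"
    unfolding indep_poly_def split using f0 f1 disj by (intro sum.union_disjoint) auto
  also have "(\<Sum>S\<in>insert v ` S1. monom (1::nat) (card S)) = (\<Sum>S\<in>S1. monom 1 (card (insert v S)))"
    using inj by (simp add: sum.reindex)
  also have "\<dots> = (\<Sum>S\<in>S1. [:0,1:] * monom 1 (card S))"
  proof (rule sum.cong[OF refl])
    fix S assume "S \<in> S1"
    hence "finite S" "v \<notin> S" using vW fin unfolding S1_def independent_set_def W_def
      by (auto intro: finite_subset)
    hence cS: "card (insert v S) = Suc (card S)" by simp
    show "monom 1 (card (insert v S)) = [:0,1:] * monom (1::nat) (card S)"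
      unfolding cS by (rule monom_shift)
  qed
  also have "\<dots> = [:0,1:] * indep_poly W E" unfolding indep_poly_def S1_def by (simp add: sum_distrib_left)
  finally show ?thesis unfolding S0_def indep_poly_def W_def by simp
qed

lemma indep_poly_union:
  assumes f1: "finite V1" and f2: "finite V2" and disj: "V1 \<inter> V2 = {}"
    and sep: "\<forall>e\<in>E. e \<subseteq> V1 \<union> V2 \<longrightarrow> e \<subseteq> V1 \<or> e \<subseteq> V2"
  shows "indep_poly (V1 \<union> V2) E = indep_poly V1 E * indep_poly V2 E"
proof -
  define I1 where "I1 = {S. independent_set V1 E S}"
  define I2 where "I2 = {S. independent_set V2 E S}"
  have fi1: "finite I1" "finite I2" unfolding I1_def I2_def using f1 f2 by (auto intro: finite_indep)
  define g where "g = (\<lambda>(A::'a set, B). A \<union> B)"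
  have inj: "inj_on g (I1 \<times> I2)"
  proof (rule inj_onI)
    fix x y assume x: "x \<in> I1 \<times> I2" and y: "y \<in> I1 \<times> I2" and eq: "g x = g y"
    obtain A B where AB: "x = (A,B)" by (cases x)
    obtain C D where CD: "y = (C,D)" by (cases y)
    have s: "A \<subseteq> V1" "B \<subseteq> V2" "C \<subseteq> V1" "D \<subseteq> V2" using x y AB CD unfolding I1_def I2_def independent_set_def by auto
    have "A = (A \<union> B) \<inter> V1" "C = (C \<union> D) \<inter> V1" "B = (A \<union> B) \<inter> V2" "D = (C \<union> D) \<inter> V2"
      using s disj by auto
    moreover have "A \<union> B = C \<union> D" using eq AB CD unfolding g_def by simp
    ultimately show "x = y" using AB CD by metis
  qed
  have img: "g ` (I1 \<times> I2) = {S. independent_set (V1 \<union> V2) E S}"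
  proof (intro equalityI subsetI)
    fix S assume "S \<in> g ` (I1 \<times> I2)"
    then obtain A B where AB: "A \<in> I1" "B \<in> I2" "S = A \<union> B" unfolding g_def by auto
    have s: "A \<subseteq> V1" "B \<subseteq> V2" and iA: "\<forall>e\<in>E. \<not> e \<subseteq> A" and iB: "\<forall>e\<in>E. \<not> e \<subseteq> B"
      using AB unfolding I1_def I2_def independent_set_def by auto
    have "\<not> e \<subseteq> A \<union> B" if e: "e \<in> E" for e
    proof
      assume sub: "e \<subseteq> A \<union> B"
      hence "e \<subseteq> V1 \<union> V2" using s by auto
      hence "e \<subseteq> V1 \<or> e \<subseteq> V2" using sep e by auto
      thus False
      proof
        assume "e \<subseteq> V1" hence "e \<subseteq> A" using sub s disj by blast
        thus False using iA e by auto
      next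
        assume "e \<subseteq> V2" hence "e \<subseteq> B" using sub s disj by blast
        thus False using iB e by auto
      qed
    qed
    thus "S \<in> {S. independent_set (V1 \<union> V2) E S}" using s AB(3) unfolding independent_set_def by auto
  next
    fix S assume "S \<in> {S. independent_set (V1 \<union> V2) E S}"
    hence SV: "S \<subseteq> V1 \<union> V2" and ind: "\<forall>e\<in>E. \<not> e \<subseteq> S" unfolding independent_set_def by auto
    have "S \<inter> V1 \<in> I1" "S \<inter> V2 \<in> I2" unfolding I1_def I2_def independent_set_def using ind by auto
    moreover have "S = g (S \<inter> V1, S \<inter> V2)" unfolding g_def using SV by auto
    ultimately show "S \<in> g ` (I1 \<times> I2)" by blast
  qed
  have "indep_poly V1 E * indep_poly V2 E = (\<Sum>A\<in>I1. \<Sum>B\<in>I2. monom 1 (card A) * monom 1 (card B))"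
    unfolding indep_poly_def I1_def I2_def by (simp add: sum_product)
  also have "\<dots> = (\<Sum>x\<in>I1 \<times> I2. monom 1 (card (g x)))"
  proof -
    have "(\<Sum>A\<in>I1. \<Sum>B\<in>I2. monom 1 (card A) * monom (1::nat) (card B)) = (\<Sum>(A,B)\<in>I1 \<times> I2. monom 1 (card A) * monom 1 (card B))"
      by (rule sum.cartesian_product)
    also have "\<dots> = (\<Sum>x\<in>I1 \<times> I2. monom 1 (card (g x)))"
    proof (rule sum.cong)
      fix x assume x: "x \<in> I1 \<times> I2"
      obtain A B where AB: "x = (A,B)" by (cases x)
      have s: "A \<subseteq> V1" "B \<subseteq> V2" using x AB unfolding I1_def I2_def independent_set_def by auto
      have fA: "finite A" "finite B" using s f1 f2 by (auto intro: finite_subset)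
      have "A \<inter> B = {}" using s disj by auto
      hence "card (A \<union> B) = card A + card B" using fA by (simp add: card_Un_disjoint)
      thus "(case x of (A, B) \<Rightarrow> monom 1 (card A) * monom (1::nat) (card B)) = monom 1 (card (g x))"
        unfolding AB g_def by (simp add: mult_monom)
    qed simp
    finally show ?thesis .
  qed
  also have "\<dots> = (\<Sum>S\<in>g ` (I1 \<times> I2). monom 1 (card S))" using inj by (simp add: sum.reindex)
  also have "\<dots> = indep_poly (V1 \<union> V2) E" unfolding img indep_poly_def ..
  finally show ?thesis by simp
qed


lemma ip_single:
  assumes E2: "\<forall>e\<in>E. card e = 2"
  shows "indep_poly {x} E = [:1,1:]"
proof -
  have "indep_poly {x} E = indep_poly ({x} - {x}) E + [:0,1:] * indep_poly ({x} - {x} - {u. {x,u} \<in> E}) E"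
    by (rule indep_poly_delete[OF _ _ E2]) auto
  thus ?thesis using indep_poly_empty[OF E2] by (simp add: one_pCons)
qed

lemma ip_pair:
  assumes E2: "\<forall>e\<in>E. card e = 2" and xy: "x \<noteq> y" and e: "{x,y} \<in> E"
  shows "indep_poly {x,y} E = [:1,2:]"
proof -
  have "indep_poly {x,y} E = indep_poly ({x,y} - {x}) E + [:0,1:] * indep_poly ({x,y} - {x} - {u. {x,u} \<in> E}) E"
    by (rule indep_poly_delete[OF _ _ E2]) auto
  moreover have "{x,y} - {x} = {y}" using xy by auto
  moreover have "{x,y} - {x} - {u. {x,u} \<in> E} = {}" using xy e by auto
  ultimately show ?thesis using indep_poly_empty[OF E2] ip_single[OF E2] by simp
qed

lemma ip_path3:
  assumes E2: "\<forall>e\<in>E. card e = 2" and d: "x \<noteq> y" "x \<noteq> z" "y \<noteq> z"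
    and e: "{x,y} \<in> E" "{y,z} \<in> E" "{x,z} \<notin> E"
  shows "indep_poly {x,y,z} E = [:1,3,1:]"
proof -
  have "indep_poly {x,y,z} E = indep_poly ({x,y,z} - {z}) E + [:0,1:] * indep_poly ({x,y,z} - {z} - {u. {z,u} \<in> E}) E"
    by (rule indep_poly_delete[OF _ _ E2]) auto
  moreover have "{x,y,z} - {z} = {x,y}" using d by auto
  moreover have "{x,y,z} - {z} - {u. {z,u} \<in> E} = {x}" using d e by (auto simp: insert_commute)
  ultimately show ?thesis using ip_pair[OF E2 d(1) e(1)] ip_single[OF E2] by simp
qed

lemma ip_path4:
  assumes E2: "\<forall>e\<in>E. card e = 2" and d: "w \<noteq> x" "w \<noteq> y" "w \<noteq> z" "x \<noteq> y" "x \<noteq> z" "y \<noteq> z"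
    and e: "{w,x} \<in> E" "{x,y} \<in> E" "{y,z} \<in> E" "{w,y} \<notin> E" "{w,z} \<notin> E" "{x,z} \<notin> E"
  shows "indep_poly {w,x,y,z} E = [:1,4,3:]"
proof -
  have "indep_poly {w,x,y,z} E = indep_poly ({w,x,y,z} - {z}) E + [:0,1:] * indep_poly ({w,x,y,z} - {z} - {u. {z,u} \<in> E}) E"
    by (rule indep_poly_delete[OF _ _ E2]) auto
  moreover have "{w,x,y,z} - {z} = {w,x,y}" using d by auto
  moreover have "{w,x,y,z} - {z} - {u. {z,u} \<in> E} = {w,x}" using d e by (auto simp: insert_commute)
  ultimately show ?thesis using ip_path3[OF E2 d(1,2,4) e(1,2,4)] ip_pair[OF E2 d(1) e(1)] by simp
qed


lemma cidx_iff: "(i,j) \<in> child_idx m n \<longleftrightarrow>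
   (i = 1 \<and> 1 \<le> j \<and> j \<le> 3) \<or> (i = 2 \<and> 1 \<le> j \<and> j \<le> m) \<or> (i = 3 \<and> 1 \<le> j \<and> j \<le> n)"
  unfolding child_idx_def by auto

lemma ball_edges: "(\<forall>e\<in>T3star_edges m n. P e) \<longleftrightarrow>
   (\<forall>i\<in>{1,2,3}. P {Root, Mid i}) \<and> (\<forall>i j. (i,j) \<in> child_idx m n \<longrightarrow> P {Mid i, Ch i j}) \<and>
   (\<forall>i j. (i,j) \<in> child_idx m n \<longrightarrow> P {Ch i j, Lf i j}) \<and> P {Lf 1 3, VX} \<and> P {VX, VY}"
proof
  assume H: "\<forall>e\<in>T3star_edges m n. P e"
  have m1: "{Root, Mid i} \<in> T3star_edges m n" if "i \<in> {1,2,3}" for i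
    using that unfolding T3star_edges_def T3_edges_def by blast
  have m2: "{Mid i, Ch i j} \<in> T3star_edges m n" if "(i,j) \<in> child_idx m n" for i j
  proof -
    have "{Mid i, Ch i j} \<in> (\<lambda>(i,j). {Mid i, Ch i j}) ` child_idx m n"
      using that by (rule rev_image_eqI) simp
    thus ?thesis unfolding T3star_edges_def T3_edges_def by blast
  qed
  have m3: "{Ch i j, Lf i j} \<in> T3star_edges m n" if "(i,j) \<in> child_idx m n" for i j
  proof -
    have "{Ch i j, Lf i j} \<in> (\<lambda>(i,j). {Ch i j, Lf i j}) ` child_idx m n"
      using that by (rule rev_image_eqI) simp
    thus ?thesis unfolding T3star_edges_def T3_edges_def by blast
  qed
  have m4: "{Lf 1 3, VX} \<in> T3star_edges m n" "{VX, VY} \<in> T3star_edges m n"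
    unfolding T3star_edges_def by auto
  show "(\<forall>i\<in>{1,2,3}. P {Root, Mid i}) \<and> (\<forall>i j. (i,j) \<in> child_idx m n \<longrightarrow> P {Mid i, Ch i j}) \<and>
   (\<forall>i j. (i,j) \<in> child_idx m n \<longrightarrow> P {Ch i j, Lf i j}) \<and> P {Lf 1 3, VX} \<and> P {VX, VY}"
    using H m1 m2 m3 m4 by blast
next
  assume H: "(\<forall>i\<in>{1,2,3}. P {Root, Mid i}) \<and> (\<forall>i j. (i,j) \<in> child_idx m n \<longrightarrow> P {Mid i, Ch i j}) \<and>
   (\<forall>i j. (i,j) \<in> child_idx m n \<longrightarrow> P {Ch i j, Lf i j}) \<and> P {Lf 1 3, VX} \<and> P {VX, VY}"
  show "\<forall>e\<in>T3star_edges m n. P e"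
  proof
    fix e assume "e \<in> T3star_edges m n"
    hence "e \<in> (\<lambda>i. {Root, Mid i}) ` {1,2,3} \<or> e \<in> (\<lambda>(i,j). {Mid i, Ch i j}) ` child_idx m n \<or>
       e \<in> (\<lambda>(i,j). {Ch i j, Lf i j}) ` child_idx m n \<or> e = {Lf 1 3, VX} \<or> e = {VX, VY}"
      unfolding T3star_edges_def T3_edges_def by blast
    thus "P e" using H by auto
  qed
qed

lemma E2: "\<forall>e\<in>T3star_edges m n. card e = 2"
  unfolding ball_edges by simp

lemma edge_cases:
  assumes "e \<in> T3star_edges m n"
  shows "(\<exists>i\<in>{1,2,3}. e = {Root, Mid i}) \<or> (\<exists>i j. (i,j) \<in> child_idx m n \<and> e = {Mid i, Ch i j}) \<or>
   (\<exists>i j. (i,j) \<in> child_idx m n \<and> e = {Ch i j, Lf i j}) \<or> e = {Lf 1 3, VX} \<or> e = {VX, VY}"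
  using assms unfolding T3star_edges_def T3_edges_def by blast

lemma edge_Ch_Lf: "(i,j) \<in> child_idx m n \<Longrightarrow> {Ch i j, Lf i j} \<in> T3star_edges m n"
  using ball_edges[of m n "\<lambda>e. e \<in> T3star_edges m n"] by auto

lemma edge_Mid_Ch: "(i,j) \<in> child_idx m n \<Longrightarrow> {Mid i, Ch i j} \<in> T3star_edges m n"
  using ball_edges[of m n "\<lambda>e. e \<in> T3star_edges m n"] by auto

lemma edge_Root_Mid: "i \<in> {1,2,3} \<Longrightarrow> {Root, Mid i} \<in> T3star_edges m n"
  using ball_edges[of m n "\<lambda>e. e \<in> T3star_edges m n"] by auto

lemma edge_x: "{Lf 1 3, VX} \<in> T3star_edges m n" "{VX, VY} \<in> T3star_edges m n"
  using ball_edges[of m n "\<lambda>e. e \<in> T3star_edges m n"] by auto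

lemma nbr_Root: "{Root, u} \<in> T3star_edges m n \<longleftrightarrow> u \<in> {Mid 1, Mid 2, Mid 3}"
proof
  assume "{Root, u} \<in> T3star_edges m n"
  from edge_cases[OF this] show "u \<in> {Mid 1, Mid 2, Mid 3}" by (auto simp: doubleton_eq_iff)
next
  assume "u \<in> {Mid 1, Mid 2, Mid 3}"
  thus "{Root, u} \<in> T3star_edges m n" using edge_Root_Mid by auto
qed

lemma nbr_Mid: "{Mid i, u} \<in> T3star_edges m n \<longleftrightarrow> (i \<in> {1,2,3} \<and> u = Root) \<or> (\<exists>j. (i,j) \<in> child_idx m n \<and> u = Ch i j)"
proof
  assume "{Mid i, u} \<in> T3star_edges m n"
  from edge_cases[OF this] show "(i \<in> {1,2,3} \<and> u = Root) \<or> (\<exists>j. (i,j) \<in> child_idx m n \<and> u = Ch i j)"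
    by (auto simp: doubleton_eq_iff)
next
  assume "(i \<in> {1,2,3} \<and> u = Root) \<or> (\<exists>j. (i,j) \<in> child_idx m n \<and> u = Ch i j)"
  thus "{Mid i, u} \<in> T3star_edges m n" using edge_Root_Mid edge_Mid_Ch by (auto simp: insert_commute)
qed

lemma nonedges: "{Ch 1 3, VX} \<notin> T3star_edges m n" "{Ch 1 3, VY} \<notin> T3star_edges m n"
  "{Lf 1 3, VY} \<notin> T3star_edges m n"
  by (auto dest!: edge_cases simp: doubleton_eq_iff)


definition pairs :: "nat \<Rightarrow> nat \<Rightarrow> tvert set" where
  "pairs i k = {v. \<exists>j. 1 \<le> j \<and> j \<le> k \<and> (v = Ch i j \<or> v = Lf i j)}"
definition leaves :: "nat \<Rightarrow> nat \<Rightarrow> tvert set" where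
  "leaves i k = {v. \<exists>j. 1 \<le> j \<and> j \<le> k \<and> v = Lf i j}"

lemma finite_pairs: "finite (pairs i k)"
proof -
  have "pairs i k \<subseteq> (\<lambda>j. Ch i j) ` {1..k} \<union> (\<lambda>j. Lf i j) ` {1..k}" unfolding pairs_def by auto
  thus ?thesis by (rule finite_subset) auto
qed

lemma finite_leaves: "finite (leaves i k)"
proof -
  have "leaves i k \<subseteq> (\<lambda>j. Lf i j) ` {1..k}" unfolding leaves_def by auto
  thus ?thesis by (rule finite_subset) auto
qed

lemma ip_pairs:
  assumes "\<And>j. 1 \<le> j \<Longrightarrow> j \<le> k \<Longrightarrow> (i,j) \<in> child_idx m n"
  shows "indep_poly (pairs i k) (T3star_edges m n) = [:1,2:]^k"
  using assms
proof (induction k)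
  case 0
  have "pairs i 0 = {}" unfolding pairs_def by auto
  thus ?case using indep_poly_empty[OF E2] by simp
next
  case (Suc k)
  have split: "pairs i (Suc k) = pairs i k \<union> {Ch i (Suc k), Lf i (Suc k)}"
    unfolding pairs_def by (auto simp: le_Suc_eq)
  have sep: "\<forall>e\<in>T3star_edges m n. e \<subseteq> pairs i k \<union> {Ch i (Suc k), Lf i (Suc k)} \<longrightarrow>
      e \<subseteq> pairs i k \<or> e \<subseteq> {Ch i (Suc k), Lf i (Suc k)}"
    unfolding ball_edges pairs_def by auto
  have "indep_poly (pairs i (Suc k)) (T3star_edges m n)
      = indep_poly (pairs i k) (T3star_edges m n) * indep_poly {Ch i (Suc k), Lf i (Suc k)} (T3star_edges m n)"
    unfolding split by (rule indep_poly_union[OF finite_pairs _ _ sep]) (auto simp: pairs_def)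
  moreover have "indep_poly {Ch i (Suc k), Lf i (Suc k)} (T3star_edges m n) = [:1,2:]"
    by (rule ip_pair[OF E2]) (use Suc.prems in \<open>auto intro: edge_Ch_Lf\<close>)
  ultimately show ?case using Suc by (simp add: mult.commute)
qed

lemma ip_leaves:
  shows "indep_poly (leaves i k) (T3star_edges m n) = [:1,1:]^k"
proof (induction k)
  case 0
  have "leaves i 0 = {}" unfolding leaves_def by auto
  thus ?case using indep_poly_empty[OF E2] by simp
next
  case (Suc k)
  have split: "leaves i (Suc k) = leaves i k \<union> {Lf i (Suc k)}"
    unfolding leaves_def by (auto simp: le_Suc_eq)
  have sep: "\<forall>e\<in>T3star_edges m n. e \<subseteq> leaves i k \<union> {Lf i (Suc k)} \<longrightarrow>
      e \<subseteq> leaves i k \<or> e \<subseteq> {Lf i (Suc k)}"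
    unfolding ball_edges leaves_def by auto
  have "indep_poly (leaves i (Suc k)) (T3star_edges m n)
      = indep_poly (leaves i k) (T3star_edges m n) * indep_poly {Lf i (Suc k)} (T3star_edges m n)"
    unfolding split by (rule indep_poly_union[OF finite_leaves _ _ sep]) (auto simp: leaves_def)
  moreover have "indep_poly {Lf i (Suc k)} (T3star_edges m n) = [:1,1:]"
    by (rule ip_single[OF E2])
  ultimately show ?case using Suc by (simp add: mult.commute)
qed


definition Pset :: "nat \<Rightarrow> nat \<Rightarrow> nat \<Rightarrow> tvert set" where
  "Pset m n i = {v. \<exists>j. (i,j) \<in> child_idx m n \<and> (v = Ch i j \<or> v = Lf i j)} \<union> (if i = 1 then {VX,VY} else {})"
definition Qset :: "nat \<Rightarrow> nat \<Rightarrow> nat \<Rightarrow> tvert set" where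
  "Qset m n i = {v. \<exists>j. (i,j) \<in> child_idx m n \<and> v = Lf i j} \<union> (if i = 1 then {VX,VY} else {})"

lemma P1_eq: "Pset m n 1 = pairs 1 2 \<union> {Ch 1 3, Lf 1 3, VX, VY}"
  unfolding Pset_def pairs_def cidx_iff by auto
lemma P2_eq: "Pset m n 2 = pairs 2 m"
  unfolding Pset_def pairs_def cidx_iff by auto
lemma P3_eq: "Pset m n 3 = pairs 3 n"
  unfolding Pset_def pairs_def cidx_iff by auto
lemma Q1_eq: "Qset m n 1 = leaves 1 2 \<union> {Lf 1 3, VX, VY}"
  unfolding Qset_def leaves_def cidx_iff by auto
lemma Q2_eq: "Qset m n 2 = leaves 2 m"
  unfolding Qset_def leaves_def cidx_iff by auto
lemma Q3_eq: "Qset m n 3 = leaves 3 n"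
  unfolding Qset_def leaves_def cidx_iff by auto

lemma finite_P: "finite (Pset m n i)"
proof -
  have "Pset m n i \<subseteq> pairs i (max 3 (max m n)) \<union> {VX, VY}"
    unfolding Pset_def pairs_def cidx_iff by auto
  thus ?thesis by (rule finite_subset) (simp add: finite_pairs)
qed

lemma finite_Q: "finite (Qset m n i)"
proof -
  have "Qset m n i \<subseteq> leaves i (max 3 (max m n)) \<union> {VX, VY}"
    unfolding Qset_def leaves_def cidx_iff by auto
  thus ?thesis by (rule finite_subset) (simp add: finite_leaves)
qed

lemma ip_P1: "indep_poly (Pset m n 1) (T3star_edges m n) = [:1,2:]^2 * [:1,4,3:]"
proof -
  have sep: "\<forall>e\<in>T3star_edges m n. e \<subseteq> pairs 1 2 \<union> {Ch 1 3, Lf 1 3, VX, VY} \<longrightarrow>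
      e \<subseteq> pairs 1 2 \<or> e \<subseteq> {Ch 1 3, Lf 1 3, VX, VY}"
    unfolding ball_edges pairs_def by auto
  have "indep_poly (Pset m n 1) (T3star_edges m n)
      = indep_poly (pairs 1 2) (T3star_edges m n) * indep_poly {Ch 1 3, Lf 1 3, VX, VY} (T3star_edges m n)"
    unfolding P1_eq by (rule indep_poly_union[OF finite_pairs _ _ sep]) (auto simp: pairs_def)
  moreover have "indep_poly (pairs 1 2) (T3star_edges m n) = [:1,2:]^2"
    by (rule ip_pairs) (auto simp: cidx_iff)
  moreover have "indep_poly {Ch 1 3, Lf 1 3, VX, VY} (T3star_edges m n) = [:1,4,3:]"
    by (rule ip_path4[OF E2 _ _ _ _ _ _ edge_Ch_Lf[of 1 3 m n] edge_x(1) edge_x(2) nonedges(1) nonedges(2) nonedges(3)])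
      (auto simp: cidx_iff)
  ultimately show ?thesis by simp
qed

lemma ip_Q1: "indep_poly (Qset m n 1) (T3star_edges m n) = [:1,1:]^2 * [:1,3,1:]"
proof -
  have sep: "\<forall>e\<in>T3star_edges m n. e \<subseteq> leaves 1 2 \<union> {Lf 1 3, VX, VY} \<longrightarrow>
      e \<subseteq> leaves 1 2 \<or> e \<subseteq> {Lf 1 3, VX, VY}"
    unfolding ball_edges leaves_def by auto
  have "indep_poly (Qset m n 1) (T3star_edges m n)
      = indep_poly (leaves 1 2) (T3star_edges m n) * indep_poly {Lf 1 3, VX, VY} (T3star_edges m n)"
    unfolding Q1_eq by (rule indep_poly_union[OF finite_leaves _ _ sep]) (auto simp: leaves_def)
  moreover have "indep_poly {Lf 1 3, VX, VY} (T3star_edges m n) = [:1,3,1:]"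
    by (rule ip_path3[OF E2 _ _ _ edge_x(1) edge_x(2) nonedges(3)]) auto
  ultimately show ?thesis using ip_leaves by simp
qed


definition Br :: "nat \<Rightarrow> nat \<Rightarrow> nat \<Rightarrow> tvert set" where
  "Br m n i = insert (Mid i) (Pset m n i)"

lemma ip_Br:
  assumes i: "i \<in> {1,2,3}"
  shows "indep_poly (Br m n i) (T3star_edges m n) =
    indep_poly (Pset m n i) (T3star_edges m n) + [:0,1:] * indep_poly (Qset m n i) (T3star_edges m n)"
proof -
  have fin: "finite (Br m n i)" unfolding Br_def using finite_P by simp
  have e1: "Br m n i - {Mid i} = Pset m n i" unfolding Br_def Pset_def by auto
  have e2: "Pset m n i - {u. {Mid i, u} \<in> T3star_edges m n} = Qset m n i"
    unfolding Pset_def Qset_def nbr_Mid by auto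
  have "indep_poly (Br m n i) (T3star_edges m n) = indep_poly (Br m n i - {Mid i}) (T3star_edges m n)
     + [:0,1:] * indep_poly (Br m n i - {Mid i} - {u. {Mid i, u} \<in> T3star_edges m n}) (T3star_edges m n)"
    by (rule indep_poly_delete[OF fin _ E2[of m n]]) (simp add: Br_def)
  thus ?thesis unfolding e1 e2 .
qed

lemma verts_eq: "T3star_verts m n - {Root} = Br m n 1 \<union> Br m n 2 \<union> Br m n 3"
  unfolding T3star_verts_def T3_verts_def Br_def Pset_def by (auto simp: cidx_iff)

lemma verts_eq2: "T3star_verts m n - {Root} - {u. {Root, u} \<in> T3star_edges m n} = Pset m n 1 \<union> Pset m n 2 \<union> Pset m n 3"
  unfolding verts_eq nbr_Root unfolding Br_def Pset_def by auto

lemma finite_verts: "finite (T3star_verts m n)"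
proof -
  have "T3star_verts m n \<subseteq> insert Root (T3star_verts m n - {Root})" by auto
  thus ?thesis unfolding verts_eq Br_def by (rule finite_subset) (simp add: finite_P)
qed

lemma sepBr: "\<forall>e\<in>T3star_edges m n. e \<subseteq> (Br m n 1 \<union> Br m n 2) \<union> Br m n 3 \<longrightarrow>
      e \<subseteq> Br m n 1 \<union> Br m n 2 \<or> e \<subseteq> Br m n 3"
  unfolding ball_edges Br_def Pset_def by (auto simp: cidx_iff)

lemma sepBr2: "\<forall>e\<in>T3star_edges m n. e \<subseteq> Br m n 1 \<union> Br m n 2 \<longrightarrow>
      e \<subseteq> Br m n 1 \<or> e \<subseteq> Br m n 2"
  unfolding ball_edges Br_def Pset_def by (auto simp: cidx_iff)

lemma sepP: "\<forall>e\<in>T3star_edges m n. e \<subseteq> (Pset m n 1 \<union> Pset m n 2) \<union> Pset m n 3 \<longrightarrow>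
      e \<subseteq> Pset m n 1 \<union> Pset m n 2 \<or> e \<subseteq> Pset m n 3"
  unfolding ball_edges Pset_def by (auto simp: cidx_iff)

lemma sepP2: "\<forall>e\<in>T3star_edges m n. e \<subseteq> Pset m n 1 \<union> Pset m n 2 \<longrightarrow>
      e \<subseteq> Pset m n 1 \<or> e \<subseteq> Pset m n 2"
  unfolding ball_edges Pset_def by (auto simp: cidx_iff)


definition NI :: "nat \<Rightarrow> nat \<Rightarrow> nat poly" where
  "NI m n = ([:1,2:]^2 * [:1,4,3:] + [:0,1:] * ([:1,1:]^2 * [:1,3,1:])) * ([:1,2:]^m + [:0,1:] * [:1,1:]^m)
      * ([:1,2:]^n + [:0,1:] * [:1,1:]^n) + [:0,1:] * ([:1,2:]^2 * [:1,4,3:] * [:1,2:]^m * [:1,2:]^n)"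

lemma comb_main: "indep_poly (T3star_verts m n) (T3star_edges m n) = NI m n"
proof -
  let ?E = "T3star_edges m n"
  have root: "Root \<in> T3star_verts m n" unfolding T3star_verts_def T3_verts_def by simp
  have del: "indep_poly (T3star_verts m n) ?E = indep_poly (T3star_verts m n - {Root}) ?E
     + [:0,1:] * indep_poly (T3star_verts m n - {Root} - {u. {Root, u} \<in> ?E}) ?E"
    by (rule indep_poly_delete[OF finite_verts root E2])
  have fB: "finite (Br m n i)" for i unfolding Br_def using finite_P by simp
  have dB: "(Br m n 1 \<union> Br m n 2) \<inter> Br m n 3 = {}" "Br m n 1 \<inter> Br m n 2 = {}"
    unfolding Br_def Pset_def by auto
  have dP: "(Pset m n 1 \<union> Pset m n 2) \<inter> Pset m n 3 = {}" "Pset m n 1 \<inter> Pset m n 2 = {}"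
    unfolding Pset_def by auto
  have uB: "indep_poly (Br m n 1 \<union> Br m n 2 \<union> Br m n 3) ?E =
      indep_poly (Br m n 1) ?E * indep_poly (Br m n 2) ?E * indep_poly (Br m n 3) ?E"
    using indep_poly_union[of "Br m n 1 \<union> Br m n 2" "Br m n 3" ?E] indep_poly_union[of "Br m n 1" "Br m n 2" ?E]
      fB dB sepBr sepBr2 by simp
  have uP: "indep_poly (Pset m n 1 \<union> Pset m n 2 \<union> Pset m n 3) ?E =
      indep_poly (Pset m n 1) ?E * indep_poly (Pset m n 2) ?E * indep_poly (Pset m n 3) ?E"
    using indep_poly_union[of "Pset m n 1 \<union> Pset m n 2" "Pset m n 3" ?E] indep_poly_union[of "Pset m n 1" "Pset m n 2" ?E]
      finite_P dP sepP sepP2 by simp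
  have P2: "indep_poly (Pset m n 2) ?E = [:1,2:]^m" unfolding P2_eq by (rule ip_pairs) (auto simp: cidx_iff)
  have P3: "indep_poly (Pset m n 3) ?E = [:1,2:]^n" unfolding P3_eq by (rule ip_pairs) (auto simp: cidx_iff)
  have Q2: "indep_poly (Qset m n 2) ?E = [:1,1:]^m" unfolding Q2_eq by (rule ip_leaves)
  have Q3: "indep_poly (Qset m n 3) ?E = [:1,1:]^n" unfolding Q3_eq by (rule ip_leaves)
  have B1: "indep_poly (Br m n 1) ?E = [:1,2:]^2 * [:1,4,3:] + [:0,1:] * ([:1,1:]^2 * [:1,3,1:])"
    using ip_Br[of 1 m n] ip_P1 ip_Q1 by simp
  have B2: "indep_poly (Br m n 2) ?E = [:1,2:]^m + [:0,1:] * [:1,1:]^m"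
    using ip_Br[of 2 m n] P2 Q2 by simp
  have B3: "indep_poly (Br m n 3) ?E = [:1,2:]^n + [:0,1:] * [:1,1:]^n"
    using ip_Br[of 3 m n] P3 Q3 by simp
  have del2: "indep_poly (T3star_verts m n) ?E = indep_poly (T3star_verts m n - {Root}) ?E
     + [:0,1:] * indep_poly (Pset m n 1 \<union> Pset m n 2 \<union> Pset m n 3) ?E"
    using del by (simp only: verts_eq2)
  have del3: "indep_poly (T3star_verts m n) ?E = indep_poly (Br m n 1 \<union> Br m n 2 \<union> Br m n 3) ?E
     + [:0,1:] * indep_poly (Pset m n 1 \<union> Pset m n 2 \<union> Pset m n 3) ?E"
    using del2 by (simp only: verts_eq)
  show ?thesis unfolding del3 uB uP B1 B2 B3 ip_P1 P2 P3 NI_def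
    by (simp add: mult.assoc)
qed


definition pf2 :: "real poly \<Rightarrow> bool" where
  "pf2 p \<longleftrightarrow> (\<forall>i. 0 \<le> coeff p i) \<and>
     (\<forall>x u v. coeff p x * coeff p (x+u+v) \<le> coeff p (x+u) * coeff p (x+v))"

definition lrle :: "real poly \<Rightarrow> real poly \<Rightarrow> bool" where
  "lrle p q \<longleftrightarrow> (\<forall>i. 0 \<le> coeff p i) \<and> (\<forall>i. 0 \<le> coeff q i) \<and>
     (\<forall>i j. i \<le> j \<longrightarrow> coeff p j * coeff q i \<le> coeff p i * coeff q j)"
lemma coeff_mult_nonneg:
  fixes p q :: "real poly"
  assumes "\<And>i. 0 \<le> coeff p i" "\<And>i. 0 \<le> coeff q i"
  shows "0 \<le> coeff (p*q) k"
  unfolding coeff_mult by (auto intro!: sum_nonneg mult_nonneg_nonneg assms)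

lemma double_sum_nonneg:
  fixes F :: "nat \<Rightarrow> nat \<Rightarrow> real"
  assumes "\<And>x y. x \<in> S \<Longrightarrow> y \<in> S \<Longrightarrow> 0 \<le> F x y + F y x"
  shows "0 \<le> (\<Sum>x\<in>S. \<Sum>y\<in>S. F x y)"
proof -
  have "(\<Sum>x\<in>S. \<Sum>y\<in>S. F x y) = (\<Sum>x\<in>S. \<Sum>y\<in>S. F y x)"
    by (rule sum.swap)
  hence "2 * (\<Sum>x\<in>S. \<Sum>y\<in>S. F x y) = (\<Sum>x\<in>S. \<Sum>y\<in>S. F x y + F y x)"
    by (simp add: sum.distrib)
  also have "\<dots> \<ge> 0" by (intro sum_nonneg assms)
  finally show ?thesis by simp
qed

lemma coeff_mult_ext:
  assumes "k \<le> j"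
  shows "coeff (r*g) k = (\<Sum>x\<le>j. coeff r x * (if x \<le> k then coeff g (k - x) else 0))"
proof -
  have "coeff (r*g) k = (\<Sum>x\<le>k. coeff r x * (if x \<le> k then coeff g (k - x) else 0))"
    unfolding coeff_mult by (intro sum.cong) auto
  also have "\<dots> = (\<Sum>x\<le>j. coeff r x * (if x \<le> k then coeff g (k - x) else 0))"
    using assms by (intro sum.mono_neutral_left) auto
  finally show ?thesis .
qed

lemma lrle_mult:
  assumes lr: "lrle p q" and g: "pf2 g"
  shows "lrle (p*g) (q*g)"
proof -
  have pn: "\<And>i. 0 \<le> coeff p i" and qn: "\<And>i. 0 \<le> coeff q i"
    and pq: "\<And>i j. i \<le> j \<Longrightarrow> coeff p j * coeff q i \<le> coeff p i * coeff q j"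
    using lr unfolding lrle_def by auto
  have gn: "\<And>i. 0 \<le> coeff g i"
    and gg: "\<And>x u v. coeff g x * coeff g (x+u+v) \<le> coeff g (x+u) * coeff g (x+v)"
    using g unfolding pf2_def by auto
  define K where "K k x = (if x \<le> k then coeff g (k - x) else 0)" for k x
  have Kn: "0 \<le> K k x" for k x unfolding K_def using gn by auto
  have KT: "K j x * K i y \<le> K i x * K j y" if "i \<le> j" "x \<le> y" for i j x y
  proof (cases "y \<le> i")
    case True
    define z where "z = i - y"
    define u where "u = y - x"
    define v where "v = j - i"
    have e1: "i - x = z + u" "j - y = z + v" "j - x = z + u + v" "i - y = z"
      using that True unfolding z_def u_def v_def by auto
    have "K j x * K i y = coeff g z * coeff g (z+u+v)"
      unfolding K_def using that True e1 by auto
    also have "\<dots> \<le> coeff g (z+u) * coeff g (z+v)" by (rule gg)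
    also have "\<dots> = K i x * K j y"
      unfolding K_def using that True e1 by auto
    finally show ?thesis .
  next
    case False
    hence "K i y = 0" unfolding K_def by auto
    thus ?thesis using Kn by (simp add: mult_nonneg_nonneg)
  qed
  have main: "coeff (p*g) j * coeff (q*g) i \<le> coeff (p*g) i * coeff (q*g) j" if ij: "i \<le> j" for i j
  proof -
    let ?S = "{..j}"
    have c1: "coeff (r*g) k = (\<Sum>x\<in>?S. coeff r x * K k x)" if "k \<le> j" for r k
      using coeff_mult_ext[OF that, of r g] unfolding K_def by simp
    define F where "F x y = coeff p x * coeff q y * (K i x * K j y - K j x * K i y)" for x y
    have "coeff (p*g) i * coeff (q*g) j - coeff (p*g) j * coeff (q*g) i
        = (\<Sum>x\<in>?S. \<Sum>y\<in>?S. F x y)"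
      unfolding c1[OF ij, of p] c1[OF ij, of q] c1[OF order_refl, of p] c1[OF order_refl, of q]
      unfolding sum_product F_def
      by (simp add: sum_subtractf[symmetric] algebra_simps)
    also have "\<dots> \<ge> 0"
    proof (rule double_sum_nonneg)
      fix x y
      have eq: "F x y + F y x = (coeff p x * coeff q y - coeff p y * coeff q x) *
               (K i x * K j y - K j x * K i y)"
        unfolding F_def by (simp add: algebra_simps)
      show "0 \<le> F x y + F y x"
      proof (cases "x \<le> y")
        case True
        have "0 \<le> coeff p x * coeff q y - coeff p y * coeff q x" using pq[OF True] by simp
        moreover have "0 \<le> K i x * K j y - K j x * K i y" using KT[OF ij True] by simp
        ultimately show ?thesis unfolding eq by simp
      next
        case False
        hence yx: "y \<le> x" by simp
        have "coeff p x * coeff q y - coeff p y * coeff q x \<le> 0" using pq[OF yx] by simp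
        moreover have "K i x * K j y - K j x * K i y \<le> 0" using KT[OF ij yx] by (simp add: algebra_simps)
        ultimately show ?thesis unfolding eq by (simp add: mult_nonpos_nonpos)
      qed
    qed
    finally show ?thesis by simp
  qed
  show ?thesis unfolding lrle_def
    using main coeff_mult_nonneg[OF pn gn] coeff_mult_nonneg[OF qn gn] by auto
qed

lemma coeff_shift: "coeff (monom 1 u * p) k = (if k < u then 0 else coeff p (k - u))"
  for p :: "real poly" by (simp add: coeff_monom_mult)

lemma coeff_shift': "coeff (p * monom 1 u) k = (if k < u then 0 else coeff p (k - u))"
  for p :: "real poly" by (simp add: coeff_monom_mult mult.commute[of p])

lemma pf2_iff_shift:
  "pf2 p \<longleftrightarrow> (\<forall>i. 0 \<le> coeff p i) \<and> (\<forall>u. lrle p (monom 1 u * p))"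
proof
  assume a: "pf2 p"
  hence pn: "\<And>i. 0 \<le> coeff p i"
    and pp: "\<And>x u v. coeff p x * coeff p (x+u+v) \<le> coeff p (x+u) * coeff p (x+v)"
    unfolding pf2_def by auto
  have "lrle p (monom 1 u * p)" for u
    unfolding lrle_def
  proof (intro conjI allI impI)
    fix i show "0 \<le> coeff (monom 1 u * p) i" using pn by (simp add: coeff_shift coeff_shift')
  next
    fix i j :: nat assume ij: "i \<le> j"
    show "coeff p j * coeff (monom 1 u * p) i \<le> coeff p i * coeff (monom 1 u * p) j"
    proof (cases "i < u")
      case True thus ?thesis using pn ij by (auto simp: coeff_shift coeff_shift')
    next
      case False
      have "coeff p (i-u + u + (j-i)) * coeff p (i-u) \<le> coeff p (i-u+u) * coeff p (i-u + (j-i))"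
        using pp[of "i-u" u "j-i"] by (simp add: mult.commute)
      moreover have "i-u + u + (j-i) = j" "i-u+u = i" "i-u + (j-i) = j - u"
        using False ij by auto
      ultimately show ?thesis using False ij by (auto simp: coeff_shift coeff_shift')
    qed
  qed (use pn in auto)
  thus "(\<forall>i. 0 \<le> coeff p i) \<and> (\<forall>u. lrle p (monom 1 u * p))" using pn by auto
next
  assume a: "(\<forall>i. 0 \<le> coeff p i) \<and> (\<forall>u. lrle p (monom 1 u * p))"
  show "pf2 p" unfolding pf2_def
  proof (intro conjI allI)
    fix i show "0 \<le> coeff p i" using a by auto
  next
    fix x u v
    have "lrle p (monom 1 u * p)" using a by auto
    hence "coeff p (x+u+v) * coeff (monom 1 u * p) (x+u) \<le> coeff p (x+u) * coeff (monom 1 u * p) (x+u+v)"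
      unfolding lrle_def by auto
    thus "coeff p x * coeff p (x + u + v) \<le> coeff p (x + u) * coeff p (x + v)"
      by (simp add: coeff_shift coeff_shift' mult.commute add.commute add.left_commute)
  qed
qed

lemma pf2_mult:
  assumes "pf2 p" "pf2 q" shows "pf2 (p*q)"
proof -
  have pn: "\<And>i. 0 \<le> coeff p i" "\<And>i. 0 \<le> coeff q i" using assms unfolding pf2_def by auto
  have "lrle (p*q) (monom 1 u * (p*q))" for u
  proof -
    have "lrle p (monom 1 u * p)" using assms(1) unfolding pf2_iff_shift by auto
    from lrle_mult[OF this assms(2)] show ?thesis by (simp add: mult.assoc)
  qed
  thus ?thesis unfolding pf2_iff_shift using coeff_mult_nonneg[OF pn] by auto
qed

lemma pf2_power: "pf2 p \<Longrightarrow> pf2 (p ^ n)"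
proof (induction n)
  case 0
  show ?case unfolding pf2_def
  proof (intro conjI allI)
    fix i show "0 \<le> coeff (p^0) i" by (simp add: coeff_1)
  next
    fix x u v :: nat
    show "coeff (p ^ 0) x * coeff (p ^ 0) (x + u + v) \<le> coeff (p ^ 0) (x + u) * coeff (p ^ 0) (x + v)"
      by (cases x; cases u; cases v; simp add: coeff_1)
  qed
next
  case (Suc n) thus ?case using pf2_mult by simp
qed

lemma lrle_consec:
  fixes p q :: "real poly"
  assumes pn: "\<And>i. 0 \<le> coeff p i" and qn: "\<And>i. 0 \<le> coeff q i"
    and cons: "\<And>k. coeff p (Suc k) * coeff q k \<le> coeff p k * coeff q (Suc k)"
    and qpos: "\<And>k. lo \<le> k \<Longrightarrow> k \<le> degree q \<Longrightarrow> 0 < coeff q k"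
    and qz: "\<And>k. k < lo \<Longrightarrow> coeff q k = 0"
    and deg: "degree p \<le> degree q"
  shows "lrle p q"
  unfolding lrle_def
proof (intro conjI allI impI)
  fix i j :: nat assume ij: "i \<le> j"
  show "coeff p j * coeff q i \<le> coeff p i * coeff q j"
  proof (cases "coeff q i = 0")
    case True thus ?thesis using pn qn by (simp add: mult_nonneg_nonneg)
  next
    case False
    hence qi: "0 < coeff q i" using qn[of i] by simp
    have ilo: "lo \<le> i" using False qz by (meson not_less)
    have "coeff p (i+d) * coeff q i \<le> coeff p i * coeff q (i+d)" for d
    proof (induction d)
      case 0 show ?case by (simp add: mult.commute)
    next
      case (Suc d)
      show ?case
      proof (cases "i + Suc d \<le> degree q")
        case False
        hence "coeff p (i + Suc d) = 0" using deg by (intro coeff_eq_0) auto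
        thus ?thesis using pn qn by (simp add: mult_nonneg_nonneg)
      next
        case True
        have qd: "0 < coeff q (i+d)" using True ilo by (intro qpos) auto
        have c: "coeff p (Suc (i+d)) * coeff q (i+d) \<le> coeff p (i+d) * coeff q (Suc (i+d))"
          by (rule cons)
        have "coeff p (Suc (i+d)) * coeff q i * coeff q (i+d)
            = (coeff p (Suc (i+d)) * coeff q (i+d)) * coeff q i" by (simp add: algebra_simps)
        also have "\<dots> \<le> (coeff p (i+d) * coeff q (Suc (i+d))) * coeff q i"
          using c qi by (intro mult_right_mono) auto
        also have "\<dots> = (coeff p (i+d) * coeff q i) * coeff q (Suc (i+d))" by (simp add: algebra_simps)
        also have "\<dots> \<le> (coeff p i * coeff q (i+d)) * coeff q (Suc (i+d))"
          using Suc.IH qn by (intro mult_right_mono) auto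
        also have "\<dots> = (coeff p i * coeff q (Suc (i+d))) * coeff q (i+d)" by (simp add: algebra_simps)
        finally have "(coeff p (Suc (i+d)) * coeff q i) * coeff q (i+d)
                       \<le> (coeff p i * coeff q (Suc (i+d))) * coeff q (i+d)" by (simp add: algebra_simps)
        hence "coeff p (Suc (i+d)) * coeff q i \<le> coeff p i * coeff q (Suc (i+d))"
          using qd by (simp add: mult_le_cancel_right)
        thus ?thesis by simp
      qed
    qed
    from this[of "j - i"] show ?thesis using ij by simp
  qed
qed (use pn qn in auto)

lemma pf2_of_lc:
  fixes p :: "real poly"
  assumes pn: "\<And>i. 0 \<le> coeff p i" and pos: "\<And>k. k \<le> degree p \<Longrightarrow> 0 < coeff p k"
    and lc: "\<And>k. coeff p k * coeff p (Suc (Suc k)) \<le> coeff p (Suc k) * coeff p (Suc k)"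
  shows "pf2 p"
proof -
  have C: "coeff p (w+u+1) * coeff p w \<le> coeff p (w+u) * coeff p (w+1)" for u w
  proof (induction u arbitrary: w)
    case 0 show ?case by (simp add: mult.commute)
  next
    case (Suc u)
    show ?case
    proof (cases "w + 1 \<le> degree p")
      case False
      hence "coeff p (w + Suc u + 1) = 0" by (intro coeff_eq_0) auto
      thus ?thesis using pn by (simp add: mult_nonneg_nonneg)
    next
      case True
      have p1: "0 < coeff p (w+1)" using True pos by auto
      have ih: "coeff p (w+1+u+1) * coeff p (w+1) \<le> coeff p (w+1+u) * coeff p (w+1+1)"
        by (rule Suc.IH)
      have l: "coeff p w * coeff p (w+2) \<le> coeff p (w+1) * coeff p (w+1)"
        using lc[of w] by (simp add: numeral_2_eq_2)
      have "coeff p (w + Suc u + 1) * coeff p w * coeff p (w+1)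
          = (coeff p (w+1+u+1) * coeff p (w+1)) * coeff p w" by (simp add: algebra_simps)
      also have "\<dots> \<le> (coeff p (w+1+u) * coeff p (w+1+1)) * coeff p w"
        using ih pn by (intro mult_right_mono) auto
      also have "\<dots> = coeff p (w+1+u) * (coeff p w * coeff p (w+2))" by (simp add: algebra_simps numeral_2_eq_2)
      also have "\<dots> \<le> coeff p (w+1+u) * (coeff p (w+1) * coeff p (w+1))"
        using l pn by (intro mult_left_mono) auto
      also have "\<dots> = (coeff p (w + Suc u) * coeff p (w+1)) * coeff p (w+1)" by (simp add: algebra_simps)
      finally have "(coeff p (w + Suc u + 1) * coeff p w) * coeff p (w+1)
          \<le> (coeff p (w + Suc u) * coeff p (w+1)) * coeff p (w+1)" by (simp add: algebra_simps)
      thus ?thesis using p1 by (simp add: mult_le_cancel_right)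
    qed
  qed
  show ?thesis
  proof (cases "p = 0")
    case True thus ?thesis unfolding pf2_def by simp
  next
    case False
    have degS: "degree (monom 1 u * p) = degree p + u" for u :: nat
      using False by (simp add: degree_mult_eq degree_monom_eq)
    have "lrle p (monom 1 u * p)" for u
    proof (rule lrle_consec[where lo=u])
      show "0 \<le> coeff (monom 1 u * p) i" for i using pn by (simp add: coeff_shift coeff_shift')
      show "coeff p (Suc k) * coeff (monom 1 u * p) k \<le> coeff p k * coeff (monom 1 u * p) (Suc k)" for k
      proof (cases "k < u")
        case True thus ?thesis using pn by (auto simp: coeff_shift coeff_shift' mult_nonneg_nonneg)
      next
        case False
        have "coeff p (k-u+u+1) * coeff p (k-u) \<le> coeff p (k-u+u) * coeff p (k-u+1)" by (rule C)
        moreover have "k-u+u+1 = Suc k" "k-u+u = k" "k - u + 1 = Suc k - u" using False by auto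
        ultimately show ?thesis using False by (auto simp: coeff_shift coeff_shift' mult.commute)
      qed
      show "0 < coeff (monom 1 u * p) k" if "u \<le> k" "k \<le> degree (monom 1 u * p)" for k
        using that pos by (auto simp: coeff_shift coeff_shift' degS)
      show "coeff (monom 1 u * p) k = 0" if "k < u" for k using that by (simp add: coeff_shift coeff_shift')
      show "degree p \<le> degree (monom 1 u * p)" by (simp add: degS)
    qed (use pn in auto)
    thus ?thesis unfolding pf2_iff_shift using pn by auto
  qed
qed

lemma lr_inc:
  assumes "lrle p q" "0 < coeff p k" "coeff p k \<le> coeff p (Suc k)"
  shows "coeff q k \<le> coeff q (Suc k)"
proof -
  have c: "coeff p (Suc k) * coeff q k \<le> coeff p k * coeff q (Suc k)" and qn: "0 \<le> coeff q k"
    using assms(1) unfolding lrle_def by auto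
  have "coeff p k * coeff q k \<le> coeff p (Suc k) * coeff q k" using assms(3) qn by (rule mult_right_mono)
  also note c
  finally show ?thesis using assms(2) by (simp add: mult_le_cancel_left)
qed

lemma lr_dec:
  assumes "lrle p q" "0 < coeff q k" "coeff q (Suc k) \<le> coeff q k"
  shows "coeff p (Suc k) \<le> coeff p k"
proof -
  have c: "coeff p (Suc k) * coeff q k \<le> coeff p k * coeff q (Suc k)" and pn: "0 \<le> coeff p k"
    using assms(1) unfolding lrle_def by auto
  note c
  also have "coeff p k * coeff q (Suc k) \<le> coeff p k * coeff q k" using assms(3) pn by (rule mult_left_mono)
  finally show ?thesis using assms(2) by (simp add: mult_le_cancel_right)
qed

definition ppos :: "real poly \<Rightarrow> bool" where
  "ppos p \<longleftrightarrow> (\<forall>i. 0 \<le> coeff p i) \<and> (\<forall>k \<le> degree p. 0 < coeff p k)"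

lemma ppos_nz: "ppos p \<Longrightarrow> p \<noteq> 0"
  unfolding ppos_def by (metis coeff_0 le0 less_irrefl)

lemma ppos_mult:
  assumes "ppos p" "ppos q" shows "ppos (p*q)"
proof -
  have pn: "\<And>i. 0 \<le> coeff p i" "\<And>i. 0 \<le> coeff q i"
    and pp: "\<And>k. k \<le> degree p \<Longrightarrow> 0 < coeff p k" "\<And>k. k \<le> degree q \<Longrightarrow> 0 < coeff q k"
    using assms unfolding ppos_def by auto
  have dg: "degree (p*q) = degree p + degree q"
    using ppos_nz[OF assms(1)] ppos_nz[OF assms(2)] by (simp add: degree_mult_eq)
  have "0 < coeff (p*q) k" if k: "k \<le> degree p + degree q" for k
  proof -
    define i where "i = min k (degree p)"
    have i1: "i \<le> k" "i \<le> degree p" "k - i \<le> degree q" using k unfolding i_def by auto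
    have "0 < coeff p i * coeff q (k - i)" using i1 pp by auto
    also have "\<dots> \<le> (\<Sum>i\<le>k. coeff p i * coeff q (k - i))"
      using i1 pn by (intro member_le_sum) (auto intro: mult_nonneg_nonneg)
    finally show ?thesis by (simp add: coeff_mult)
  qed
  thus ?thesis unfolding ppos_def using coeff_mult_nonneg[OF pn] dg by auto
qed

lemma ppos_power: "ppos p \<Longrightarrow> ppos (p^n)"
  by (induction n) (auto simp: ppos_mult, simp add: ppos_def coeff_1)


definition pa :: "real poly" where "pa = [:1,2:]"
definition pb :: "real poly" where "pb = [:1,1:]"
definition pt :: "real poly" where "pt = [:0,1:]"
definition R0 :: "real poly" where "R0 = [:1,8,20,16,1:]"
definition U :: "nat \<Rightarrow> real poly" where "U m = pa^m + pt * pb^m"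

lemma coeff_pa_pow: "coeff (pa^N) k = real (N choose k) * 2^k"
proof (induction N arbitrary: k)
  case 0 thus ?case by (cases k) (auto simp: coeff_1)
next
  case (Suc N)
  have e: "pa^Suc N = pCons 0 (smult 2 (pa^N)) + pa^N"
    unfolding pa_def by (simp add: algebra_simps)
  show ?case
  proof (cases k)
    case 0 thus ?thesis using Suc.IH[of 0] by (subst e) simp
  next
    case (Suc k') thus ?thesis using Suc.IH[of k'] Suc.IH[of "Suc k'"] by (subst e) (simp add: algebra_simps)
  qed
qed

lemma coeff_pb_pow: "coeff (pb^N) k = real (N choose k)"
proof (induction N arbitrary: k)
  case 0 thus ?case by (cases k) (auto simp: coeff_1)
next
  case (Suc N)
  have e: "pb^Suc N = pCons 0 (pb^N) + pb^N"
    unfolding pb_def by (simp add: algebra_simps)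
  show ?case
  proof (cases k)
    case 0 thus ?thesis using Suc.IH[of 0] by (subst e) simp
  next
    case (Suc k') thus ?thesis using Suc.IH[of k'] Suc.IH[of "Suc k'"] by (subst e) (simp add: algebra_simps)
  qed
qed

lemma coeff_pt_mult: "coeff (pt * p) k = (if k = 0 then 0 else coeff p (k - 1))"
  unfolding pt_def by (cases k) auto

lemma coeff_U: "coeff (U m) k = real (m choose k) * 2^k + (if k = 0 then 0 else real (m choose (k-1)))"
  unfolding U_def by (simp add: coeff_pa_pow coeff_pt_mult coeff_pb_pow)

lemma degree_pa_pow: "degree (pa^N) = N"
  unfolding pa_def by (simp add: degree_power_eq)
lemma degree_pb_pow: "degree (pb^N) = N"
  unfolding pb_def by (simp add: degree_power_eq)
lemma degree_U: "degree (U m) = Suc m"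
proof -
  have d1: "degree (pt * pb^m) = Suc m" unfolding pt_def pb_def
    by (simp add: degree_mult_eq degree_power_eq)
  show ?thesis unfolding U_def using d1 degree_pa_pow[of m]
    by (subst degree_add_eq_right) auto
qed

lemma ppos_lin: "0 < x \<Longrightarrow> 0 < y \<Longrightarrow> ppos [:x,y:]"
  unfolding ppos_def
proof (intro conjI allI impI)
  fix i show "0 < x \<Longrightarrow> 0 < y \<Longrightarrow> 0 \<le> coeff [:x, y:] i" by (cases i) (auto simp: coeff_pCons split: nat.split)
next
  fix k assume "0 < x" "0 < y" "k \<le> degree [:x,y:]"
  thus "0 < coeff [:x,y:] k" by (cases k) auto
qed

lemma pf2_lin: "0 < x \<Longrightarrow> 0 < y \<Longrightarrow> pf2 [:x,y:]"
proof (rule pf2_of_lc)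
  assume "0 < x" "0 < y"
  thus "0 \<le> coeff [:x, y:] i" for i by (cases i) (auto simp: coeff_pCons split: nat.split)
  show "0 < coeff [:x, y:] k" if "k \<le> degree [:x, y:]" for k
    using that \<open>0<x\<close> \<open>0<y\<close> by (cases k) auto
  show "coeff [:x, y:] k * coeff [:x, y:] (Suc (Suc k)) \<le> coeff [:x, y:] (Suc k) * coeff [:x, y:] (Suc k)" for k
    by (cases k) auto
qed

lemma ppos_pa: "ppos pa" unfolding pa_def by (rule ppos_lin) auto
lemma ppos_pb: "ppos pb" unfolding pb_def by (rule ppos_lin) auto
lemma pf2_pa: "pf2 pa" unfolding pa_def by (rule pf2_lin) auto
lemma pf2_pb: "pf2 pb" unfolding pb_def by (rule pf2_lin) auto

lemma coeff_R0: "coeff R0 k = (if k = 0 then 1 else if k = 1 then 8 else if k = 2 then 20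
   else if k = 3 then 16 else if k = 4 then 1 else 0)"
  unfolding R0_def by (cases k; cases "k - 1"; cases "k - 2"; cases "k-3"; cases "k-4") (auto simp: numeral_eq_Suc)

lemma degree_R0: "degree R0 = 4" unfolding R0_def by simp

lemma ppos_R0: "ppos R0"
  unfolding ppos_def degree_R0 by (auto simp: coeff_R0)

lemma pf2_R0: "pf2 R0"
  by (rule pf2_of_lc) (auto simp: coeff_R0 degree_R0)


lemma choose_succ_nat: "(m choose Suc k) * Suc k = (m choose k) * (m - k)"
proof (cases m)
  case 0 then show ?thesis by simp
next
  case (Suc n)
  have "(Suc n choose Suc k) * Suc k = Suc n * (n choose k)" using Suc_times_binomial_eq[of n k] by simp
  moreover have "(m - k) * (m choose k) = m * ((m - 1) choose k)" by (rule binomial_absorb_comp)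
  ultimately show ?thesis using Suc by (simp add: mult.commute)
qed

lemma choose_rel: "real (m choose Suc k) * (real k + 1) = real (m choose k) * (real m - real k)"
proof (cases "k \<le> m")
  case True
  have "real ((m choose Suc k) * Suc k) = real ((m choose k) * (m - k))" using choose_succ_nat by metis
  thus ?thesis using True by (simp add: of_nat_diff algebra_simps)
next
  case False thus ?thesis by (simp add: binomial_eq_0)
qed

lemma pow2_ge: "real n \<le> 2^n"
proof -
  have "n < 2^n" by (rule less_exp)
  hence "real n < real (2^n)" by (simp only: of_nat_less_iff)
  thus ?thesis by simp
qed

lemma binom_pf2: "real (m choose x) * real (m choose (x+u+v)) \<le> real (m choose (x+u)) * real (m choose (x+v))"
proof -
  have "pf2 (pb^m)" by (rule pf2_power[OF pf2_pb])
  thus ?thesis unfolding pf2_def coeff_pb_pow by auto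
qed

lemma ppos_U: "ppos (U m)"
  unfolding ppos_def degree_U
proof (intro conjI allI impI)
  fix i show "0 \<le> coeff (U m) i" by (simp add: coeff_U)
next
  fix k assume k: "k \<le> Suc m"
  show "0 < coeff (U m) k"
  proof (cases "k \<le> m")
    case True
    hence "0 < real (m choose k) * 2^k" by simp
    thus ?thesis by (simp add: coeff_U add_pos_nonneg)
  next
    case False
    hence "k = Suc m" using k by simp
    thus ?thesis by (simp add: coeff_U binomial_eq_0)
  qed
qed

lemma U_lc: "coeff (U m) k * coeff (U m) (Suc (Suc k)) \<le> coeff (U m) (Suc k) * coeff (U m) (Suc k)"
proof (cases k)
  case 0
  have r: "real (m choose 2) * 2 = real m * (real m - 1)"
    using choose_rel[of m 1] by (simp add: numeral_2_eq_2)
  have "0 \<le> real m * real m" by simp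
  thus ?thesis using 0 r by (simp add: coeff_U numeral_2_eq_2 algebra_simps)
next
  case (Suc j)
  define c0 where "c0 = real (m choose j)"
  define c1 where "c1 = real (m choose Suc j)"
  define c2 where "c2 = real (m choose Suc (Suc j))"
  define c3 where "c3 = real (m choose Suc (Suc (Suc j)))"
  define X :: real where "X = 2^(Suc j)"
  have X0: "0 \<le> X" unfolding X_def by simp
  have cn: "0 \<le> c0" "0 \<le> c1" "0 \<le> c2" "0 \<le> c3" unfolding c0_def c1_def c2_def c3_def by auto
  have u1: "coeff (U m) k = c1 * X + c0" unfolding Suc c0_def c1_def X_def by (simp add: coeff_U)
  have u2: "coeff (U m) (Suc k) = c2 * (2*X) + c1" unfolding Suc c1_def c2_def X_def by (simp add: coeff_U)
  have u3: "coeff (U m) (Suc (Suc k)) = c3 * (4*X) + c2" unfolding Suc c2_def c3_def X_def by (simp add: coeff_U)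
  have b1: "c0 * c2 \<le> c1 * c1" using binom_pf2[of m j 1 1] unfolding c0_def c1_def c2_def by simp
  have b2: "c1 * c3 \<le> c2 * c2" using binom_pf2[of m "Suc j" 1 1] unfolding c3_def c1_def c2_def by simp
  have b3: "c0 * c3 \<le> c1 * c2" using binom_pf2[of m j 1 2] unfolding c0_def c3_def c1_def c2_def
    by (simp add: numeral_2_eq_2)
  have key: "c1 * c2 \<le> 4 * X * (c2 * c2 - c1 * c3)"
  proof (cases "c2 = 0")
    case True
    hence "c1 * c3 \<le> 0" using b2 by simp
    thus ?thesis using True X0 by (simp add: mult_nonneg_nonpos)
  next
    case False
    hence jm: "Suc (Suc j) \<le> m" unfolding c2_def by simp
    define e where "e = real m - real j - 1"
    have e0: "0 < e" using jm unfolding e_def by simp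
    have r2: "c2 * (real j + 2) = c1 * e"
      using choose_rel[of m "Suc j"] unfolding c2_def c1_def e_def by (simp add: algebra_simps)
    have r3: "c3 * (real j + 3) = c2 * (e - 1)"
      using choose_rel[of m "Suc (Suc j)"] unfolding c3_def c2_def e_def by (simp add: algebra_simps)
    have "e * (real j + 3) * (4 * X * (c2 * c2 - c1 * c3) - c1 * c2)
        = 4 * X * c2 * c2 * e * (real j + 3) - 4 * X * (c1 * e) * (c3 * (real j + 3))
          - (c1 * e) * c2 * (real j + 3)" by (simp add: algebra_simps)
    also have "\<dots> = 4 * X * c2 * c2 * e * (real j + 3) - 4 * X * (c2 * (real j + 2)) * (c2 * (e - 1))
          - (c2 * (real j + 2)) * c2 * (real j + 3)" by (simp only: r2 r3)
    also have "\<dots> = c2 * c2 * (4 * X * (e + real j + 2) - (real j + 2) * (real j + 3))"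
      by (simp add: algebra_simps)
    finally have eq: "e * (real j + 3) * (4 * X * (c2 * c2 - c1 * c3) - c1 * c2)
        = c2 * c2 * (4 * X * (e + real j + 2) - (real j + 2) * (real j + 3))" .
    have "real (j+3) \<le> 2^(j+3)" by (rule pow2_ge)
    moreover have "(2::real)^(j+3) = 4 * X" unfolding X_def by (simp add: power_add)
    ultimately have x4: "real j + 3 \<le> 4 * X" by simp
    have ej: "real j + 3 \<le> e + real j + 2" using jm unfolding e_def by simp
    have "(real j + 2) * (real j + 3) \<le> (real j + 3) * (real j + 3)" by (simp add: mult_right_mono)
    also have "\<dots> \<le> 4 * X * (e + real j + 2)" using x4 ej by (intro mult_mono) auto
    finally have "0 \<le> c2 * c2 * (4 * X * (e + real j + 2) - (real j + 2) * (real j + 3))"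
      by simp
    hence "0 \<le> e * (real j + 3) * (4 * X * (c2 * c2 - c1 * c3) - c1 * c2)" using eq by simp
    moreover have "0 < e * (real j + 3)" using e0 by simp
    ultimately have "0 \<le> 4 * X * (c2 * c2 - c1 * c3) - c1 * c2"
      using zero_le_mult_iff by (metis linorder_not_less)
    thus ?thesis by simp
  qed
  have t1: "0 \<le> X * (4 * X * (c2 * c2 - c1 * c3) - c1 * c2)" using key X0 by simp
  have t2: "0 \<le> 4 * X * (c1 * c2 - c0 * c3)" using b3 X0 by simp
  have t3: "0 \<le> c1 * c1 - c0 * c2" using b1 by simp
  have "(c2 * (2*X) + c1) * (c2 * (2*X) + c1) - (c1 * X + c0) * (c3 * (4*X) + c2)
      = X * (4 * X * (c2 * c2 - c1 * c3) - c1 * c2) + 4 * X * (c1 * c2 - c0 * c3) + (c1 * c1 - c0 * c2)"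
    by (simp add: algebra_simps)
  thus ?thesis unfolding u1 u2 u3 using t1 t2 t3 by linarith
qed

lemma pf2_U: "pf2 (U m)"
  by (rule pf2_of_lc) (use ppos_U U_lc in \<open>auto simp: ppos_def\<close>)


lemma coeff_lin_mult: "coeff ([:x,y:] * q) k = x * coeff q k + (if k = 0 then 0 else y * coeff q (k-1))"
  by (cases k) (simp_all add: algebra_simps)

lemma exp_ineq1: "4 * k \<le> 2^(k+1) + (4::nat)"
  by (induction k) (auto simp: algebra_simps)

lemma exp_ineq0: "6 * k \<le> 2^(k+1) + (9::nat)"
proof (induction k)
  case 0 thus ?case by simp
next
  case (Suc k)
  show ?case
  proof (cases "k \<le> 1")
    case True thus ?thesis by (cases k) auto
  next
    case False
    hence "(4::nat) \<le> 2^k"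
      using power_increasing[of 2 "k" "2::nat"] by simp
    thus ?thesis using Suc by simp
  qed
qed

lemma exp_ineq2: "7 * k \<le> 2^(k+1) + (13::nat)"
proof (induction k)
  case 0 thus ?case by simp
next
  case (Suc k)
  show ?case
  proof (cases "k \<le> 1")
    case True thus ?thesis by (cases k) auto
  next
    case False
    hence "(4::nat) \<le> 2^k"
      using power_increasing[of 2 "k" "2::nat"] by simp
    thus ?thesis using Suc by simp
  qed
qed

lemma exp_ineq3: "3 * k * k \<le> 2^(k+1) + 12 * k + (7::nat)"
proof (induction k)
  case 0 thus ?case by simp
next
  case (Suc k)
  have "3 * Suc k * Suc k = 3 * k * k + 6 * k + 3" by (simp add: algebra_simps)
  also have "\<dots> \<le> 2^(k+1) + 12 * k + 7 + 6 * k + 3" using Suc by simp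
  also have "\<dots> \<le> 2^(Suc k + 1) + 12 * Suc k + 7" using exp_ineq0[of k] by simp
  finally show ?case .
qed

lemma lr_U_upper: "lrle (U m) (pa^m * pb)"
proof (rule lrle_consec[where lo=0])
  have pp: "ppos (pa^m * pb)" by (intro ppos_mult ppos_power ppos_pa ppos_pb)
  have nz: "pa^m \<noteq> 0" "pb \<noteq> 0" using ppos_nz[OF ppos_power[OF ppos_pa]] ppos_nz[OF ppos_pb] by auto
  have dh: "degree (pa^m * pb) = Suc m"
    using nz by (simp add: degree_mult_eq degree_pa_pow, simp add: pb_def)
  show "0 \<le> coeff (U m) i" for i using ppos_U unfolding ppos_def by auto
  show "0 \<le> coeff (pa ^ m * pb) i" for i using pp unfolding ppos_def by auto
  show "0 < coeff (pa ^ m * pb) k" if "0 \<le> k" "k \<le> degree (pa ^ m * pb)" for k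
    using pp that unfolding ppos_def by auto
  show "coeff (pa ^ m * pb) k = 0" if "k < 0" for k using that by simp
  show "degree (U m) \<le> degree (pa ^ m * pb)" using dh degree_U by simp
  have ch: "coeff (pa ^ m * pb) k = real (m choose k) * 2^k + (if k = 0 then 0 else real (m choose (k-1)) * 2^(k-1))" for k
    unfolding mult.commute[of "pa^m"] pb_def coeff_lin_mult by (simp add: coeff_pa_pow)
  show "coeff (U m) (Suc k) * coeff (pa ^ m * pb) k \<le> coeff (U m) k * coeff (pa ^ m * pb) (Suc k)" for k
  proof -
    define c where "c = real (m choose k)"
    define c' where "c' = real (m choose Suc k)"
    define cm where "cm = (if k = 0 then 0 else real (m choose (k-1)))"
    define X :: real where "X = 2^k"
    have X1: "1 \<le> X" unfolding X_def by simp
    have cn: "0 \<le> c" "0 \<le> c'" "0 \<le> cm" unfolding c_def c'_def cm_def by auto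
    have lcb: "cm * c' \<le> c * c"
    proof (cases k)
      case 0 thus ?thesis unfolding cm_def c_def by simp
    next
      case (Suc k0)
      show ?thesis using binom_pf2[of m k0 1 1] unfolding cm_def c_def c'_def Suc by (simp add: mult.commute)
    qed
    have e1: "coeff (U m) (Suc k) = 2 * X * c' + c" unfolding c_def c'_def X_def by (simp add: coeff_U)
    have e2: "coeff (U m) k = c * X + cm" unfolding c_def cm_def X_def by (simp add: coeff_U)
    have e3: "coeff (pa ^ m * pb) k = X * (c + cm / 2)"
      unfolding ch c_def cm_def X_def by (cases k) (auto simp: algebra_simps)
    have e4: "coeff (pa ^ m * pb) (Suc k) = X * (2 * c' + c)"
      unfolding ch c_def c'_def X_def by (simp add: algebra_simps)
    have "(c * X + cm) * (2 * c' + c) - (2 * X * c' + c) * (c + cm / 2)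
          = (X - 1) * (c * c - cm * c') + c' * cm + c * cm / 2" by (simp add: algebra_simps)
    also have "\<dots> \<ge> 0" using X1 lcb cn by (intro add_nonneg_nonneg mult_nonneg_nonneg) auto
    finally have "(2 * X * c' + c) * (c + cm / 2) \<le> (c * X + cm) * (2 * c' + c)" by simp
    hence "X * ((2 * X * c' + c) * (c + cm / 2)) \<le> X * ((c * X + cm) * (2 * c' + c))"
      using X1 by (intro mult_left_mono) auto
    thus ?thesis unfolding e1 e2 e3 e4 by (simp add: algebra_simps)
  qed
qed


lemma exp_ineq2': "7 * k \<le> 2^(k+1) + (9::nat)"
proof (induction k)
  case 0 thus ?case by simp
next
  case (Suc k)
  show ?case
  proof (cases "k \<le> 2")
    case True thus ?thesis by (cases k; cases "k - 1") auto
  next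
    case False
    hence "(8::nat) \<le> 2^k"
      using power_increasing[of 3 "k" "2::nat"] by simp
    thus ?thesis using Suc by simp
  qed
qed

lemma P2_nonneg:
  fixes kk r X :: real
  assumes k1: "1 \<le> kk" and r0: "0 \<le> r"
    and e1: "4 * kk \<le> 2 * X + 4" and e2: "7 * kk \<le> 2 * X + 9" and e3: "3 * kk * kk \<le> 2 * X + 12 * kk + 7"
  shows "0 \<le> (2*X - 4*kk + 4) * r^3 + (2*X*(kk+1) - 7*kk^2 + 13*kk + 4) * r^2
             + (2*X*kk - 3*kk^3 + 12*kk^2 + 7*kk) * r + 3*kk^2*(kk+1)"
proof -
  have c3: "0 \<le> 2*X - 4*kk + 4" using e1 by simp
  have "(7*kk - 9) * (kk+1) \<le> 2*X*(kk+1)" using e2 k1 by (intro mult_right_mono) auto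
  hence c2: "0 \<le> 2*X*(kk+1) - 7*kk^2 + 13*kk + 4" using k1 by (simp add: algebra_simps power2_eq_square)
  have "0 \<le> kk * (2*X - 3*kk*kk + 12*kk + 7)" using e3 k1 by simp
  hence c1: "0 \<le> 2*X*kk - 3*kk^3 + 12*kk^2 + 7*kk" by (simp add: algebra_simps power2_eq_square power3_eq_cube)
  have c0: "0 \<le> 3*kk^2*(kk+1)" using k1 by simp
  have "0 \<le> (2*X - 4*kk + 4) * r^3" using c3 r0 by simp
  moreover have "0 \<le> (2*X*(kk+1) - 7*kk^2 + 13*kk + 4) * r^2" using c2 r0 by simp
  moreover have "0 \<le> (2*X*kk - 3*kk^3 + 12*kk^2 + 7*kk) * r" using c1 r0 by simp
  ultimately show ?thesis using c0 by linarith
qed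

lemma lr_U_lower: "lrle ([:2,3:] * pa^p0) (U (Suc p0))"
proof (rule lrle_consec[where lo=0])
  let ?f = "[:2,3:] * pa^p0"
  have pf: "ppos ?f" by (intro ppos_mult ppos_power ppos_pa ppos_lin) auto
  have nz: "pa^p0 \<noteq> 0" using ppos_nz[OF ppos_power[OF ppos_pa]] by auto
  have df: "degree ?f = Suc p0" by (subst degree_mult_eq) (use nz in \<open>auto simp: degree_pa_pow\<close>)
  show "0 \<le> coeff ?f i" for i using pf unfolding ppos_def by auto
  show "0 \<le> coeff (U (Suc p0)) i" for i using ppos_U unfolding ppos_def by auto
  show "0 < coeff (U (Suc p0)) k" if "0 \<le> k" "k \<le> degree (U (Suc p0))" for k
    using ppos_U that unfolding ppos_def by auto
  show "coeff (U (Suc p0)) k = 0" if "k < 0" for k using that by simp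
  show "degree ?f \<le> degree (U (Suc p0))" using df degree_U by simp
  have cf: "coeff ?f j = 2 * (real (p0 choose j) * 2^j) + (if j = 0 then 0 else 3 * (real (p0 choose (j-1)) * 2^(j-1)))" for j
    unfolding coeff_lin_mult by (simp add: coeff_pa_pow)
  show "coeff ?f (Suc k) * coeff (U (Suc p0)) k \<le> coeff ?f k * coeff (U (Suc p0)) (Suc k)" for k
  proof (cases k)
    case 0
    thus ?thesis by (simp add: cf coeff_U coeff_pa_pow algebra_simps)
  next
    case (Suc k1)
    define a0 where "a0 = (if k1 = 0 then 0 else real (p0 choose (k1 - 1)))"
    define a1 where "a1 = real (p0 choose k1)"
    define a2 where "a2 = real (p0 choose Suc k1)"
    define a3 where "a3 = real (p0 choose Suc (Suc k1))"
    define X :: real where "X = 2^k"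
    define kk where "kk = real k"
    have X0: "0 < X" unfolding X_def by simp
    have an: "0 \<le> a0" "0 \<le> a1" "0 \<le> a2" "0 \<le> a3" unfolding a0_def a1_def a2_def a3_def by auto
    have fk: "coeff ?f k = X * (2*a2 + 3/2*a1)"
      unfolding cf Suc a1_def a2_def X_def by (simp add: algebra_simps)
    have fk1: "coeff ?f (Suc k) = X * (4*a3 + 3*a2)"
      unfolding cf Suc a3_def a2_def X_def by (simp add: algebra_simps)
    have uk: "coeff (U (Suc p0)) k = (a1 + a2) * X + (a0 + a1)"
    proof (cases k1)
      case 0 thus ?thesis unfolding Suc a0_def a1_def a2_def X_def by (simp add: coeff_U)
    next
      case (Suc k2) thus ?thesis unfolding \<open>k = Suc k1\<close> a0_def a1_def a2_def X_def
        by (simp add: coeff_U algebra_simps)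
    qed
    have uk1: "coeff (U (Suc p0)) (Suc k) = (a2 + a3) * (2*X) + (a1 + a2)"
      unfolding Suc a1_def a2_def a3_def X_def by (simp add: coeff_U algebra_simps)
    define T where "T = X*(a2*a2 - a1*a3) + 2*a2*a2 + 1/2*a1*a2 + 3/2*a1*a1 - 4*a1*a3 - 4*a0*a3 - 3*a0*a2"
    have Teq: "coeff ?f k * coeff (U (Suc p0)) (Suc k) - coeff ?f (Suc k) * coeff (U (Suc p0)) k = X * T"
      unfolding fk fk1 uk uk1 T_def by (simp add: algebra_simps)
    have T0: "0 \<le> T"
    proof (cases "a1 = 0")
      case True
      hence "p0 < k1" unfolding a1_def by simp
      hence "a2 = 0" "a3 = 0" unfolding a2_def a3_def by auto
      thus ?thesis unfolding T_def using True by simp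
    next
      case False
      hence a1p: "0 < a1" using an by simp
      hence kp: "k1 \<le> p0" unfolding a1_def by (metis binomial_eq_0 not_le of_nat_0 less_irrefl)
      define r where "r = real p0 - real k1"
      have r0: "0 \<le> r" using kp unfolding r_def by simp
      have kk1: "1 \<le> kk" unfolding kk_def Suc by simp
      have rel2: "a2 * kk = a1 * r"
        using choose_rel[of p0 k1] unfolding a2_def a1_def r_def kk_def Suc by (simp add: add.commute)
      have rel3: "a3 * (kk + 1) = a2 * (r - 1)"
        using choose_rel[of p0 "Suc k1"] unfolding a3_def a2_def r_def kk_def Suc by (simp add: algebra_simps)
      have rel0: "a1 * (kk - 1) = a0 * (r + 1)"
      proof (cases k1)
        case 0 thus ?thesis unfolding a0_def kk_def Suc by simp
      next
        case (Suc k2)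
        show ?thesis using choose_rel[of p0 k2] unfolding a1_def a0_def r_def kk_def \<open>k = Suc k1\<close> Suc
          by (simp add: algebra_simps)
      qed
      have s1: "a2*a2*(kk*kk) = a1*a1*(r*r)" using rel2 by (metis mult.commute mult.left_commute)
      have a3m: "a3 * (kk * (kk + 1)) = a1 * r * (r - 1)"
      proof -
        have "a3 * (kk * (kk + 1)) = (a3 * (kk + 1)) * kk" by (simp add: algebra_simps)
        also have "\<dots> = (a2 * kk) * (r - 1)" unfolding rel3 by (simp add: algebra_simps)
        also have "\<dots> = a1 * r * (r - 1)" unfolding rel2 by simp
        finally show ?thesis .
      qed
      have s2: "a1*a3*(kk*(kk+1)) = a1*a1*r*(r-1)"
      proof -
        have "a1*a3*(kk*(kk+1)) = a1*(a3*(kk*(kk+1)))" by (simp only: mult.assoc)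
        also have "\<dots> = a1*(a1*r*(r-1))" by (simp only: a3m)
        finally show ?thesis by (simp add: algebra_simps)
      qed
      have s3: "a1*a2*kk = a1*a1*r" using rel2 by (simp add: algebra_simps)
      have s4: "a0*a3*((r+1)*(kk*(kk+1))) = a1*a1*(kk-1)*r*(r-1)"
      proof -
        have "a0*a3*((r+1)*(kk*(kk+1))) = (a0*(r+1))*(a3*(kk*(kk+1)))" by (simp add: algebra_simps)
        also have "\<dots> = (a1*(kk-1))*(a1*r*(r-1))" unfolding a3m rel0 by simp
        finally show ?thesis by (simp add: algebra_simps)
      qed
      have s5: "a0*a2*((r+1)*kk) = a1*a1*(kk-1)*r"
      proof -
        have "a0*a2*((r+1)*kk) = (a0*(r+1))*(a2*kk)" by (simp add: algebra_simps)
        also have "\<dots> = (a1*(kk-1))*(a1*r)" unfolding rel2 rel0 by simp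
        finally show ?thesis by (simp add: algebra_simps)
      qed
      define P where "P = (2*X - 4*kk + 4) * r^3 + (2*X*(kk+1) - 7*kk^2 + 13*kk + 4) * r^2
             + (2*X*kk - 3*kk^3 + 12*kk^2 + 7*kk) * r + 3*kk^2*(kk+1)"
      have "T * (2 * kk^2 * (kk+1) * (r+1)) =
          X*( (a2*a2*(kk*kk))*(2*(kk+1)*(r+1)) - (a1*a3*(kk*(kk+1)))*(2*kk*(r+1)) )
          + 2*(a2*a2*(kk*kk))*(2*(kk+1)*(r+1)) + 1/2*(a1*a2*kk)*(2*kk*(kk+1)*(r+1))
          + 3/2*a1*a1*(2 * kk^2 * (kk+1) * (r+1)) - 4*(a1*a3*(kk*(kk+1)))*(2*kk*(r+1))
          - 4*(a0*a3*((r+1)*(kk*(kk+1))))*(2*kk) - 3*(a0*a2*((r+1)*kk))*(2*kk*(kk+1))"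
        unfolding T_def by (simp add: algebra_simps power2_eq_square)
      also have "\<dots> = X*( (a1*a1*(r*r))*(2*(kk+1)*(r+1)) - (a1*a1*r*(r-1))*(2*kk*(r+1)) )
          + 2*(a1*a1*(r*r))*(2*(kk+1)*(r+1)) + 1/2*(a1*a1*r)*(2*kk*(kk+1)*(r+1))
          + 3/2*a1*a1*(2 * kk^2 * (kk+1) * (r+1)) - 4*(a1*a1*r*(r-1))*(2*kk*(r+1))
          - 4*(a1*a1*(kk-1)*r*(r-1))*(2*kk) - 3*(a1*a1*(kk-1)*r)*(2*kk*(kk+1))"
        unfolding s1 s2 s3 s4 s5 by simp
      also have "\<dots> = a1 * a1 * P" unfolding P_def by (simp add: algebra_simps power2_eq_square power3_eq_cube)
      finally have TD: "T * (2 * kk^2 * (kk+1) * (r+1)) = a1 * a1 * P" .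
      have P0: "0 \<le> P" unfolding P_def
      proof (rule P2_nonneg[OF kk1 r0])
        have "4 * k \<le> 2^(k+1) + 4" by (rule exp_ineq1)
        hence "real (4 * k) \<le> real (2^(k+1) + 4)" by (simp only: of_nat_le_iff)
        thus "4 * kk \<le> 2 * X + 4" unfolding kk_def X_def by simp
        have "7 * k \<le> 2^(k+1) + 9" by (rule exp_ineq2')
        hence "real (7 * k) \<le> real (2^(k+1) + 9)" by (simp only: of_nat_le_iff)
        thus "7 * kk \<le> 2 * X + 9" unfolding kk_def X_def by simp
        have "3 * k * k \<le> 2^(k+1) + 12 * k + 7" by (rule exp_ineq3)
        hence "real (3 * k * k) \<le> real (2^(k+1) + 12 * k + 7)" by (simp only: of_nat_le_iff)
        thus "3 * kk * kk \<le> 2 * X + 12 * kk + 7" unfolding kk_def X_def by simp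
      qed
      have "0 \<le> a1 * a1 * P" using P0 by simp
      hence TD0: "0 \<le> T * (2 * kk^2 * (kk+1) * (r+1))" unfolding TD .
      have Dp: "0 < 2 * kk^2 * (kk+1) * (r+1)" using kk1 r0 by simp
      show ?thesis
      proof (rule ccontr)
        assume "\<not> 0 \<le> T"
        hence "T * (2 * kk^2 * (kk+1) * (r+1)) < 0" using Dp by (simp add: mult_neg_pos)
        thus False using TD0 by simp
      qed
    qed
    have "0 \<le> X * T" using X0 T0 by simp
    thus ?thesis using Teq by simp
  qed
qed


lemma pf2_inc_before:
  assumes "pf2 p" "0 < coeff p k" "coeff p k \<le> coeff p (Suc k)" "k' \<le> k"
  shows "coeff p k' \<le> coeff p (Suc k')"
proof -
  have pn: "\<And>i. 0 \<le> coeff p i" and pp: "\<And>x u v. coeff p x * coeff p (x+u+v) \<le> coeff p (x+u) * coeff p (x+v)"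
    using assms(1) unfolding pf2_def by auto
  have "coeff p k' * coeff p (k'+1+(k-k')) \<le> coeff p (k'+1) * coeff p (k'+(k-k'))" by (rule pp)
  hence c: "coeff p k' * coeff p (Suc k) \<le> coeff p (Suc k') * coeff p k" using assms(4) by simp
  have "coeff p k' * coeff p k \<le> coeff p k' * coeff p (Suc k)" using assms(3) pn by (intro mult_left_mono) auto
  also note c
  finally have "coeff p k * coeff p k' \<le> coeff p k * coeff p (Suc k')" by (simp add: mult.commute)
  thus ?thesis using assms(2) by (simp add: mult_le_cancel_left)
qed

lemma pf2_dec_after:
  assumes "pf2 p" "0 < coeff p k" "coeff p (Suc k) \<le> coeff p k" "k \<le> k'"
  shows "coeff p (Suc k') \<le> coeff p k'"
proof -
  have pn: "\<And>i. 0 \<le> coeff p i" and pp: "\<And>x u v. coeff p x * coeff p (x+u+v) \<le> coeff p (x+u) * coeff p (x+v)"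
    using assms(1) unfolding pf2_def by auto
  have "coeff p k * coeff p (k+(k'-k)+1) \<le> coeff p (k+(k'-k)) * coeff p (k+1)" by (rule pp)
  hence c: "coeff p k * coeff p (Suc k') \<le> coeff p k' * coeff p (Suc k)" using assms(4) by simp
  also have "\<dots> \<le> coeff p k' * coeff p k" using assms(3) pn by (intro mult_left_mono) auto
  finally have "coeff p k * coeff p (Suc k') \<le> coeff p k * coeff p k'" by (simp add: mult.commute)
  thus ?thesis using assms(2) by (simp add: mult_le_cancel_left)
qed

lemma combine_unimodal:
  fixes A B :: "nat \<Rightarrow> real"
  assumes J1: "1 \<le> J"
    and Ainc: "\<And>k. Suc k < J \<Longrightarrow> A k \<le> A (Suc k)"
    and Adec: "\<And>k. J < k \<Longrightarrow> A (Suc k) \<le> A k"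
    and Anv: "A J < A (J - 1) \<Longrightarrow> A (Suc J) \<le> A J"
    and Binc: "\<And>k. k < J \<Longrightarrow> B k \<le> B (Suc k)"
    and Bdec: "\<And>k. J \<le> k \<Longrightarrow> B (Suc k) \<le> B k"
  shows "\<exists>j. (\<forall>i<j. A i + B i \<le> A (Suc i) + B (Suc i)) \<and> (\<forall>i. j \<le> i \<longrightarrow> A (Suc i) + B (Suc i) \<le> A i + B i)"
proof (cases "A (J - 1) \<le> A J")
  case True
  have inc: "A i + B i \<le> A (Suc i) + B (Suc i)" if "i < J" for i
  proof (cases "Suc i < J")
    case True thus ?thesis using Ainc Binc that by (simp add: add_mono)
  next
    case False
    hence ij: "i = J - 1" "Suc i = J" using that by auto
    have "B i \<le> B (Suc i)" using Binc that by simp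
    thus ?thesis using \<open>A (J - 1) \<le> A J\<close> ij by (simp add: add_mono)
  qed
  have dec: "A (Suc i) + B (Suc i) \<le> A i + B i" if "J < i" for i
    using Adec Bdec that by (simp add: add_mono)
  show ?thesis
  proof (cases "A J + B J \<le> A (Suc J) + B (Suc J)")
    case True
    show ?thesis
    proof (rule exI[of _ "Suc J"], intro conjI allI impI)
      fix i assume "i < Suc J"
      thus "A i + B i \<le> A (Suc i) + B (Suc i)" using inc True by (cases "i = J") auto
    next
      fix i assume "Suc J \<le> i" thus "A (Suc i) + B (Suc i) \<le> A i + B i" using dec by simp
    qed
  next
    case False
    show ?thesis
    proof (rule exI[of _ J], intro conjI allI impI)
      fix i assume "i < J" thus "A i + B i \<le> A (Suc i) + B (Suc i)" using inc by simp
    next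
      fix i assume "J \<le> i" thus "A (Suc i) + B (Suc i) \<le> A i + B i" using dec False by (cases "i = J") auto
    qed
  qed
next
  case False
  hence AJ: "A (Suc J) \<le> A J" using Anv by simp
  have dec: "A (Suc i) + B (Suc i) \<le> A i + B i" if "J \<le> i" for i
  proof (cases "i = J")
    case True thus ?thesis using AJ Bdec by (simp add: add_mono)
  next
    case False thus ?thesis using Adec Bdec that by (simp add: add_mono)
  qed
  have inc: "A i + B i \<le> A (Suc i) + B (Suc i)" if "Suc i < J" for i
    using Ainc Binc that by (simp add: add_mono)
  show ?thesis
  proof (cases "A (J - 1) + B (J - 1) \<le> A J + B J")
    case True
    show ?thesis
    proof (rule exI[of _ J], intro conjI allI impI)
      fix i assume "i < J"
      thus "A i + B i \<le> A (Suc i) + B (Suc i)" using inc True J1 by (cases "Suc i = J") auto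
    next
      fix i assume "J \<le> i" thus "A (Suc i) + B (Suc i) \<le> A i + B i" using dec by simp
    qed
  next
    case c2: False
    show ?thesis
    proof (rule exI[of _ "J - 1"], intro conjI allI impI)
      fix i assume "i < J - 1" thus "A i + B i \<le> A (Suc i) + B (Suc i)" using inc by simp
    next
      fix i assume "J - 1 \<le> i"
      thus "A (Suc i) + B (Suc i) \<le> A i + B i" using dec c2 J1
        by (cases "i = J - 1") auto
    qed
  qed
qed

lemma pb_mult_unimodal:
  fixes c :: "nat \<Rightarrow> real"
  assumes "\<forall>i<j. c i \<le> c (Suc i)" "\<forall>i. j \<le> i \<longrightarrow> c (Suc i) \<le> c i" "\<forall>i. 0 \<le> c i"
  defines "d \<equiv> \<lambda>i. c i + (if i = 0 then 0 else c (i - 1))"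
  shows "\<exists>j'. (\<forall>i<j'. d i \<le> d (Suc i)) \<and> (\<forall>i. j' \<le> i \<longrightarrow> d (Suc i) \<le> d i)"
proof -
  have inc: "d i \<le> d (Suc i)" if "i < j" for i
  proof (cases i)
    case 0 thus ?thesis unfolding d_def using assms(3) by simp
  next
    case (Suc i0)
    have "c i0 \<le> c i" "c i \<le> c (Suc i)" using assms(1) that Suc by auto
    thus ?thesis unfolding d_def Suc by simp
  qed
  have dec: "d (Suc i) \<le> d i" if "Suc j \<le> i" for i
  proof -
    obtain i0 where i0: "i = Suc i0" using \<open>Suc j \<le> i\<close> by (cases i) auto
    have "c (Suc i) \<le> c i" "c i \<le> c i0" using assms(2) that i0 by auto
    thus ?thesis unfolding d_def i0 by simp
  qed
  show ?thesis
  proof (cases "d j \<le> d (Suc j)")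
    case True
    show ?thesis
      by (rule exI[of _ "Suc j"]) (use inc dec True in \<open>auto simp: less_Suc_eq\<close>)
  next
    case False
    show ?thesis
    proof (rule exI[of _ j], intro conjI allI impI)
      fix i assume "i < j" thus "d i \<le> d (Suc i)" by (rule inc)
    next
      fix i assume "j \<le> i" thus "d (Suc i) \<le> d i" using dec False by (cases "i = j") auto
    qed
  qed
qed

lemma pa_inc: "3*k + 1 \<le> 2*N \<Longrightarrow> coeff (pa^N) k \<le> coeff (pa^N) (Suc k)"
proof -
  assume a: "3*k + 1 \<le> 2*N"
  have r: "real (N choose Suc k) * (real k + 1) = real (N choose k) * (real N - real k)" by (rule choose_rel)
  have "real (3*k + 1) \<le> real (2*N)" using a by (simp only: of_nat_le_iff)
  hence "real k + 1 \<le> 2 * (real N - real k)" by simp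
  hence "real (N choose k) * (real k + 1) \<le> real (N choose k) * (2 * (real N - real k))"
    by (intro mult_left_mono) auto
  also have "\<dots> = 2 * (real (N choose k) * (real N - real k))" by simp
  also have "\<dots> = 2 * real (N choose Suc k) * (real k + 1)" by (simp only: r[symmetric] mult.assoc)
  finally have "real (N choose k) \<le> 2 * real (N choose Suc k)"
    by (simp add: mult_le_cancel_right pos_add_strict)
  hence "real (N choose k) * 2^k \<le> 2 * real (N choose Suc k) * 2^k" by simp
  thus ?thesis by (simp add: coeff_pa_pow algebra_simps)
qed

lemma pa_dec: "2*N \<le> 3*k + 1 \<Longrightarrow> coeff (pa^N) (Suc k) \<le> coeff (pa^N) k"
proof -
  assume a: "2*N \<le> 3*k + 1"
  have r: "real (N choose Suc k) * (real k + 1) = real (N choose k) * (real N - real k)" by (rule choose_rel)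
  have "real (2*N) \<le> real (3*k + 1)" using a by (simp only: of_nat_le_iff)
  hence "2 * (real N - real k) \<le> real k + 1" by simp
  hence "real (N choose k) * (2 * (real N - real k)) \<le> real (N choose k) * (real k + 1)"
    by (intro mult_left_mono) auto
  moreover have "real (N choose k) * (2 * (real N - real k)) = 2 * real (N choose Suc k) * (real k + 1)"
    by (simp only: mult.left_commute[of _ 2] r[symmetric] mult.assoc)
  ultimately have "2 * real (N choose Suc k) * (real k + 1) \<le> real (N choose k) * (real k + 1)" by simp
  hence "2 * real (N choose Suc k) \<le> real (N choose k)"
    by (simp add: mult_le_cancel_right pos_add_strict)
  hence "2 * real (N choose Suc k) * 2^k \<le> real (N choose k) * 2^k" by simp
  thus ?thesis by (simp add: coeff_pa_pow algebra_simps)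
qed

lemma beta_diff:
  assumes k1: "1 \<le> k" and kN: "k \<le> N"
  shows "(real k + 1) * (real N - real k + 1) * (coeff ([:1,3:] * pa^N) k - coeff ([:1,3:] * pa^N) (Suc k))
    = 2^(k-1) * real (N choose k) * (3 * real k * (real k + 1) - 4 * (real N + 1) * (real N - real k + 1))"
proof -
  obtain k0 where k0: "k = Suc k0" using k1 by (cases k) auto
  define c where "c = real (N choose k)"
  define cp where "cp = real (N choose Suc k)"
  define cm where "cm = real (N choose k0)"
  define X :: real where "X = 2^k0"
  have e1: "coeff ([:1,3:] * pa^N) k = X * (2*c + 3*cm)"
    unfolding coeff_lin_mult k0 c_def cm_def X_def by (simp add: coeff_pa_pow algebra_simps)
  have e2: "coeff ([:1,3:] * pa^N) (Suc k) = X * (4*cp + 6*c)"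
    unfolding coeff_lin_mult k0 c_def cp_def X_def by (simp add: coeff_pa_pow algebra_simps)
  have r1: "cp * (real k + 1) = c * (real N - real k)" unfolding cp_def c_def by (rule choose_rel)
  have r2: "c * real k = cm * (real N - real k + 1)"
    using choose_rel[of N k0] unfolding c_def cm_def k0 by (simp add: algebra_simps)
  have "(real k + 1) * (real N - real k + 1) * (coeff ([:1,3:] * pa^N) k - coeff ([:1,3:] * pa^N) (Suc k))
      = (real k + 1) * (real N - real k + 1) * (X * (2*c + 3*cm) - X * (4*cp + 6*c))" by (simp only: e1 e2)
  also have "\<dots> = X * (3 * (real k + 1) * (cm * (real N - real k + 1)) - 4 * (real N - real k + 1) * (cp * (real k + 1))
          - 4 * c * (real k + 1) * (real N - real k + 1))"
    by (simp add: algebra_simps)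
  also have "\<dots> = X * (3 * (real k + 1) * (c * real k) - 4 * (real N - real k + 1) * (c * (real N - real k))
          - 4 * c * (real k + 1) * (real N - real k + 1))"
    unfolding r1 r2 by simp
  also have "\<dots> = X * c * (3 * real k * (real k + 1) - 4 * (real N + 1) * (real N - real k + 1))"
    by (simp add: algebra_simps)
  also have "\<dots> = 2^(k-1) * real (N choose k) * (3 * real k * (real k + 1) - 4 * (real N + 1) * (real N - real k + 1))"
    unfolding X_def c_def k0 by simp
  finally show ?thesis .
qed

lemma beta_inc:
  assumes "1 \<le> k" "k \<le> N" "3 * k * (k + 1) \<le> 4 * (N + 1) * (N - k + 1)"
  shows "coeff ([:1,3:] * pa^N) k \<le> coeff ([:1,3:] * pa^N) (Suc k)"
proof -
  have "real (3 * k * (k + 1)) \<le> real (4 * (N + 1) * (N - k + 1))" using assms(3) by (simp only: of_nat_le_iff)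
  moreover have "real (3 * k * (k + 1)) = 3 * real k * (real k + 1)" by (simp add: algebra_simps)
  moreover have "real (4 * (N + 1) * (N - k + 1)) = 4 * (real N + 1) * (real N - real k + 1)"
  proof -
    have "real (N - k + 1) = real N - real k + 1" using assms(2) by (simp add: of_nat_diff)
    moreover have "real (4 * (N + 1) * (N - k + 1)) = 4 * (real N + 1) * real (N - k + 1)"
      by (simp only: of_nat_mult of_nat_add of_nat_numeral of_nat_1)
    ultimately show ?thesis by simp
  qed
  ultimately have h: "3 * real k * (real k + 1) \<le> 4 * (real N + 1) * (real N - real k + 1)" by simp
  have "(real k + 1) * (real N - real k + 1) * (coeff ([:1,3:] * pa^N) k - coeff ([:1,3:] * pa^N) (Suc k)) \<le> 0"
    unfolding beta_diff[OF assms(1,2)] using h by (intro mult_nonneg_nonpos) auto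
  moreover have "0 < (real k + 1) * (real N - real k + 1)" using assms(2) by simp
  ultimately have "coeff ([:1,3:] * pa^N) k - coeff ([:1,3:] * pa^N) (Suc k) \<le> 0"
    using mult_pos_pos[of "(real k + 1) * (real N - real k + 1)"
        "coeff ([:1,3:] * pa^N) k - coeff ([:1,3:] * pa^N) (Suc k)"] by linarith
  thus ?thesis by simp
qed

lemma beta_dec:
  assumes "1 \<le> k" "k \<le> N" "4 * (N + 1) * (N - k + 1) \<le> 3 * k * (k + 1)"
  shows "coeff ([:1,3:] * pa^N) (Suc k) \<le> coeff ([:1,3:] * pa^N) k"
proof -
  have "real (4 * (N + 1) * (N - k + 1)) \<le> real (3 * k * (k + 1))" using assms(3) by (simp only: of_nat_le_iff)
  moreover have "real (3 * k * (k + 1)) = 3 * real k * (real k + 1)" by (simp add: algebra_simps)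
  moreover have "real (4 * (N + 1) * (N - k + 1)) = 4 * (real N + 1) * (real N - real k + 1)"
  proof -
    have "real (N - k + 1) = real N - real k + 1" using assms(2) by (simp add: of_nat_diff)
    moreover have "real (4 * (N + 1) * (N - k + 1)) = 4 * (real N + 1) * real (N - k + 1)"
      by (simp only: of_nat_mult of_nat_add of_nat_numeral of_nat_1)
    ultimately show ?thesis by simp
  qed
  ultimately have h: "4 * (real N + 1) * (real N - real k + 1) \<le> 3 * real k * (real k + 1)" by simp
  have "0 \<le> (real k + 1) * (real N - real k + 1) * (coeff ([:1,3:] * pa^N) k - coeff ([:1,3:] * pa^N) (Suc k))"
    unfolding beta_diff[OF assms(1,2)] using h by (intro mult_nonneg_nonneg) auto
  moreover have "0 < (real k + 1) * (real N - real k + 1)" using assms(2) by simp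
  ultimately show ?thesis by (simp add: zero_le_mult_iff)
qed


lemma pa5: "pa^5 = [:1,10,40,80,80,32:]" unfolding pa_def by (simp add: numeral_eq_Suc field_simps)
lemma pa6: "pa^6 = [:1,12,60,160,240,192,64:]" unfolding pa_def by (simp add: numeral_eq_Suc field_simps)
lemma L1fix: "R0 * [:2,3:]^2 = [:4,44,185,376,376,156,9:]" unfolding R0_def by (simp add: power2_eq_square)
lemma H2fix: "R0 * pb^2 = [:1,10,37,64,53,18,1:]" unfolding R0_def pb_def by (simp add: power2_eq_square)

lemma k7_cases: "(k::nat) < 7 \<Longrightarrow> k = 0 \<or> k = 1 \<or> k = 2 \<or> k = 3 \<or> k = 4 \<or> k = 5 \<or> k = 6" by auto

lemma lrle7:
  fixes a0 a1 a2 a3 a4 a5 a6 b0 b1 b2 b3 b4 b5 b6 :: real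
  defines "p \<equiv> [:a0,a1,a2,a3,a4,a5,a6:]" and "q \<equiv> [:b0,b1,b2,b3,b4,b5,b6:]"
  assumes "0 \<le> a0" "0 \<le> a1" "0 \<le> a2" "0 \<le> a3" "0 \<le> a4" "0 \<le> a5" "0 \<le> a6"
   "0 < b0" "0 < b1" "0 < b2" "0 < b3" "0 < b4" "0 < b5" "0 < b6"
   "a1 * b0 \<le> a0 * b1" "a2 * b1 \<le> a1 * b2" "a3 * b2 \<le> a2 * b3" "a4 * b3 \<le> a3 * b4"
   "a5 * b4 \<le> a4 * b5" "a6 * b5 \<le> a5 * b6"
  shows "lrle p q"
proof (rule lrle_consec[where lo=0])
  have dq: "degree q = 6" unfolding q_def using assms by simp
  have dp: "degree p \<le> 6" unfolding p_def by (simp add: degree_pCons_le)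
  show "0 \<le> coeff p i" for i
  proof (cases "i < 7")
    case True thus ?thesis using k7_cases[OF True] assms unfolding p_def by (auto simp: numeral_eq_Suc)
  next
    case False thus ?thesis using dp by (simp add: coeff_eq_0)
  qed
  show "0 \<le> coeff q i" for i
  proof (cases "i < 7")
    case True thus ?thesis using k7_cases[OF True] assms unfolding q_def by (auto simp: numeral_eq_Suc)
  next
    case False thus ?thesis using dq by (simp add: coeff_eq_0)
  qed
  show "0 < coeff q k" if "0 \<le> k" "k \<le> degree q" for k
    using that k7_cases[of k] assms unfolding dq unfolding q_def by (auto simp: numeral_eq_Suc)
  show "coeff q k = 0" if "k < 0" for k using that by simp
  show "degree p \<le> degree q" using dp dq by simp
  show "coeff p (Suc k) * coeff q k \<le> coeff p k * coeff q (Suc k)" for k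
  proof (cases "k < 7")
    case True thus ?thesis using k7_cases[OF True] assms unfolding p_def q_def
      by (auto simp: numeral_eq_Suc)
  next
    case False thus ?thesis using dp by (simp add: coeff_eq_0)
  qed
qed

lemma lr_fixed1: "lrle (pa^5) (R0 * [:2,3:]^2)"
proof -
  have "lrle [:1,10,40,80,80,32,0:] [:4,44,185,376,376,156,9:]" by (rule lrle7) auto
  thus ?thesis unfolding pa5 L1fix by simp
qed

lemma lr_fixed2: "lrle (R0 * pb^2) (pa^6)"
proof -
  have "lrle [:1,10,37,64,53,18,1:] [:1,12,60,160,240,192,64:]" by (rule lrle7) auto
  thus ?thesis unfolding pa6 H2fix by simp
qed


lemma J_facts:
  fixes s :: nat assumes s2: "2 \<le> s"
  shows "5 \<le> (2*s+11) div 3" "(2*s+11) div 3 \<le> s + 3" "3*((2*s+11) div 3) \<le> 2*s+11"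
    "2*s + 9 \<le> 3*((2*s+11) div 3)"
    "3*((2*s+11) div 3 - 2)*((2*s+11) div 3 - 2 + 1) \<le> 4*(s+2+1)*(s+2-((2*s+11) div 3 - 2)+1)"
    "4*(s+2+1)*(s+2-((2*s+11) div 3 - 1)+1) \<le> 3*((2*s+11) div 3 - 1)*((2*s+11) div 3 - 1 + 1)"
proof -
  define q where "q = s div 3"
  define r where "r = s mod 3"
  have sq: "s = 3*q + r" unfolding q_def r_def by simp
  have r3: "r < 3" unfolding r_def by simp
  consider "r = 0" | "r = 1" | "r = 2" using r3 by linarith
  note cs = this
  have all: "5 \<le> (2*s+11) div 3 \<and> (2*s+11) div 3 \<le> s + 3 \<and> 3*((2*s+11) div 3) \<le> 2*s+11 \<and>
    2*s + 9 \<le> 3*((2*s+11) div 3) \<and>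
    3*((2*s+11) div 3 - 2)*((2*s+11) div 3 - 2 + 1) \<le> 4*(s+2+1)*(s+2-((2*s+11) div 3 - 2)+1) \<and>
    4*(s+2+1)*(s+2-((2*s+11) div 3 - 1)+1) \<le> 3*((2*s+11) div 3 - 1)*((2*s+11) div 3 - 1 + 1)"
  proof (cases rule: cs)
    case 1
    hence q1: "1 \<le> q" using s2 sq by simp
    have J: "(2*s+11) div 3 = 2*q+3" using 1 sq by simp
    have e1: "2*q+3-2 = 2*q+1" "2*q+3-1 = 2*q+2" "3*q+2-(2*q+1) = q+1" "3*q+2-(2*q+2) = q" by auto
    show ?thesis unfolding J using 1 sq q1 by (simp add: e1 algebra_simps)
  next
    case 2
    have J: "(2*s+11) div 3 = 2*q+4" using 2 sq by simp
    have e1: "2*q+4-2 = 2*q+2" "2*q+4-1 = 2*q+3" "3*q+1+2-(2*q+2) = q+1" "3*q+1+2-(2*q+3) = q" by auto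
    show ?thesis unfolding J using 2 sq s2 by (simp add: e1 algebra_simps)
  next
    case 3
    have J: "(2*s+11) div 3 = 2*q+5" using 3 sq by simp
    have e1: "2*q+5-2 = 2*q+3" "2*q+5-1 = 2*q+4" "3*q+2+2-(2*q+3) = q+1" "3*q+2+2-(2*q+4) = q" by auto
    show ?thesis unfolding J using 3 sq s2 by (simp add: e1 algebra_simps)
  qed
  thus "5 \<le> (2*s+11) div 3" "(2*s+11) div 3 \<le> s + 3" "3*((2*s+11) div 3) \<le> 2*s+11"
    "2*s + 9 \<le> 3*((2*s+11) div 3)"
    "3*((2*s+11) div 3 - 2)*((2*s+11) div 3 - 2 + 1) \<le> 4*(s+2+1)*(s+2-((2*s+11) div 3 - 2)+1)"
    "4*(s+2+1)*(s+2-((2*s+11) div 3 - 1)+1) \<le> 3*((2*s+11) div 3 - 1)*((2*s+11) div 3 - 1 + 1)"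
    by auto
qed


definition Ipol :: "nat \<Rightarrow> nat \<Rightarrow> real poly" where
  "Ipol m n = pb * (R0 * U m * U n + pt * ([:1,3:] * pa^(m+n+2)))"

lemma ppos_deg: "ppos p \<Longrightarrow> ppos q \<Longrightarrow> degree (p*q) = degree p + degree q"
  using ppos_nz by (simp add: degree_mult_eq)

lemma ppos_pos: "ppos p \<Longrightarrow> k \<le> degree p \<Longrightarrow> 0 < coeff p k"
  unfolding ppos_def by auto

lemma ppos_nonneg: "ppos p \<Longrightarrow> 0 \<le> coeff p k"
  unfolding ppos_def by auto

lemma real_unimodal:
  assumes m1: "1 \<le> m" and n1: "1 \<le> n"
  shows "\<exists>j. (\<forall>i<j. coeff (Ipol m n) i \<le> coeff (Ipol m n) (Suc i)) \<and>
             (\<forall>i. j \<le> i \<longrightarrow> coeff (Ipol m n) (Suc i) \<le> coeff (Ipol m n) i)"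
proof -
  obtain m0 where m0: "m = Suc m0" using m1 by (cases m) auto
  obtain n0 where n0: "n = Suc n0" using n1 by (cases n) auto
  define s where "s = m + n"
  have s2: "2 \<le> s" unfolding s_def using m1 n1 by simp
  define J where "J = (2*s+11) div 3"
  note JF = J_facts[OF s2, folded J_def]
  define A where "A = R0 * U m * U n"
  define Bp where "Bp = [:1,3:] * pa^(s+2)"
  define B where "B = pt * Bp"
  have lin23: "ppos [:2,3:]" "pf2 [:2,3:]" by (auto intro: ppos_lin pf2_lin)
  have lin13: "ppos [:1,3:]" "pf2 [:1,3:]" by (auto intro: ppos_lin pf2_lin)
  have ppa: "ppos (pa^N)" "pf2 (pa^N)" for N by (auto intro: ppos_power pf2_power ppos_pa pf2_pa)
  define fL where "fL p0 = [:2,3:] * pa^p0" for p0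
  have pfL: "ppos (fL p0)" "pf2 (fL p0)" for p0 unfolding fL_def
    by (rule ppos_mult[OF lin23(1) ppa(1)], rule pf2_mult[OF lin23(2) ppa(2)])
  have phU: "ppos (pa^k * pb)" "pf2 (pa^k * pb)" for k
    by (rule ppos_mult[OF ppa(1) ppos_pb], rule pf2_mult[OF ppa(2) pf2_pb])
  have dfL: "degree (fL p0) = Suc p0" for p0
    unfolding fL_def using ppos_deg[OF lin23(1) ppa(1)] by (simp add: degree_pa_pow)
  have dhU: "degree (pa^k * pb) = Suc k" for k
    using ppos_deg[OF ppa(1) ppos_pb] by (simp add: degree_pa_pow pb_def)
  have ppA: "ppos A" "pf2 A" unfolding A_def
    by (auto intro!: ppos_mult pf2_mult ppos_R0 pf2_R0 ppos_U pf2_U)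
  have dA: "degree A = s + 6" unfolding A_def s_def
    using ppos_deg[OF ppos_mult[OF ppos_R0 ppos_U] ppos_U] ppos_deg[OF ppos_R0 ppos_U]
    by (simp add: degree_U degree_R0)
  define L0 where "L0 = pa^(s+3)"
  define L1 where "L1 = R0 * fL m0 * fL n0"
  define L2 where "L2 = R0 * U m * fL n0"
  have lr01: "lrle L0 L1"
  proof -
    have "lrle (pa^5 * pa^(s-2)) (R0 * [:2,3:]^2 * pa^(s-2))" by (rule lrle_mult[OF lr_fixed1 ppa(2)])
    moreover have "pa^5 * pa^(s-2) = L0" unfolding L0_def using s2 by (simp add: power_add[symmetric] add.commute)
    moreover have "R0 * [:2,3:]^2 * pa^(s-2) = L1"
    proof -
      have e: "s - 2 = m0 + n0" unfolding s_def m0 n0 by simp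
      have "pa^(s-2) = pa^m0 * pa^n0" by (simp only: e power_add)
      thus ?thesis unfolding L1_def fL_def power2_eq_square by (simp only: mult_ac)
    qed
    ultimately show ?thesis by simp
  qed
  have lr12: "lrle L1 L2"
  proof -
    have "pf2 (R0 * fL n0)" by (intro pf2_mult pf2_R0 pfL(2))
    from lrle_mult[OF lr_U_lower[of m0, folded fL_def] this]
    show ?thesis unfolding L1_def L2_def m0 by (simp add: mult_ac)
  qed
  have lr2A: "lrle L2 A"
  proof -
    have "pf2 (R0 * U m)" by (intro pf2_mult pf2_R0 pf2_U)
    from lrle_mult[OF lr_U_lower[of n0, folded fL_def] this]
    show ?thesis unfolding L2_def A_def n0 by (simp add: mult_ac)
  qed
  have pL1: "ppos L1" unfolding L1_def by (intro ppos_mult ppos_R0 pfL(1))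
  have dL1: "degree L1 = s + 4" unfolding L1_def s_def m0 n0
    using ppos_deg[OF ppos_mult[OF ppos_R0 pfL(1)] pfL(1)] ppos_deg[OF ppos_R0 pfL(1)]
    by (simp add: dfL degree_R0)
  have pL2: "ppos L2" unfolding L2_def by (intro ppos_mult ppos_R0 pfL(1) ppos_U)
  have dL2: "degree L2 = s + 5" unfolding L2_def s_def m0 n0
    using ppos_deg[OF ppos_mult[OF ppos_R0 ppos_U] pfL(1)] ppos_deg[OF ppos_R0 ppos_U]
    by (simp add: dfL degree_R0 degree_U)
  have Ainc: "coeff A k \<le> coeff A (Suc k)" if k: "Suc k < J" for k
  proof -
    have kk: "3*k + 1 \<le> 2*(s+3)" using k JF(3) by arith
    have ks: "k \<le> s + 3" using k JF(2) by linarith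
    have i0: "coeff L0 k \<le> coeff L0 (Suc k)" unfolding L0_def by (rule pa_inc[OF kk])
    have p0: "0 < coeff L0 k" unfolding L0_def using ppos_pos[OF ppa(1)] ks by (simp add: degree_pa_pow)
    have i1: "coeff L1 k \<le> coeff L1 (Suc k)" by (rule lr_inc[OF lr01 p0 i0])
    have p1: "0 < coeff L1 k" using ppos_pos[OF pL1] ks dL1 by simp
    have i2: "coeff L2 k \<le> coeff L2 (Suc k)" by (rule lr_inc[OF lr12 p1 i1])
    have p2: "0 < coeff L2 k" using ppos_pos[OF pL2] ks dL2 by simp
    show ?thesis by (rule lr_inc[OF lr2A p2 i2])
  qed
  define H1 where "H1 = R0 * U m * (pa^n * pb)"
  define H2 where "H2 = R0 * (pa^m * pb) * (pa^n * pb)"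
  define H3 where "H3 = pa^(s+6)"
  have lrA1: "lrle A H1"
  proof -
    have "pf2 (R0 * U m)" by (intro pf2_mult pf2_R0 pf2_U)
    from lrle_mult[OF lr_U_upper[of n] this]
    show ?thesis unfolding H1_def A_def by (simp add: mult_ac)
  qed
  have lr12u: "lrle H1 H2"
  proof -
    have "pf2 (R0 * (pa^n * pb))" by (intro pf2_mult pf2_R0 phU(2))
    from lrle_mult[OF lr_U_upper[of m] this]
    show ?thesis unfolding H1_def H2_def by (simp add: mult_ac)
  qed
  have lr23: "lrle H2 H3"
  proof -
    have "lrle (R0 * pb^2 * pa^s) (pa^6 * pa^s)" by (rule lrle_mult[OF lr_fixed2 ppa(2)])
    moreover have "R0 * pb^2 * pa^s = H2" unfolding H2_def s_def by (simp add: power_add power2_eq_square mult_ac)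
    moreover have "pa^6 * pa^s = H3" unfolding H3_def by (simp add: power_add[symmetric] add.commute)
    ultimately show ?thesis by simp
  qed
  have pH1: "ppos H1" unfolding H1_def by (intro ppos_mult ppos_R0 phU(1) ppos_U)
  have dH1: "degree H1 = s + 6" unfolding H1_def s_def
    using ppos_deg[OF ppos_mult[OF ppos_R0 ppos_U] phU(1)] ppos_deg[OF ppos_R0 ppos_U]
    by (simp add: dhU degree_R0 degree_U)
  have pH2: "ppos H2" unfolding H2_def by (intro ppos_mult ppos_R0 phU(1))
  have dH2: "degree H2 = s + 6" unfolding H2_def s_def
    using ppos_deg[OF ppos_mult[OF ppos_R0 phU(1)] phU(1)] ppos_deg[OF ppos_R0 phU(1)]
    by (simp add: dhU degree_R0)
  have Adec: "coeff A (Suc k) \<le> coeff A k" if k: "J < k" for k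
  proof (cases "k \<le> s + 5")
    case True
    have kk: "2*(s+6) \<le> 3*k + 1" using k JF(4) by arith
    have d3: "coeff H3 (Suc k) \<le> coeff H3 k" unfolding H3_def by (rule pa_dec[OF kk])
    have p3: "0 < coeff H3 k" unfolding H3_def using ppos_pos[OF ppa(1)] True by (simp add: degree_pa_pow)
    have d2: "coeff H2 (Suc k) \<le> coeff H2 k" by (rule lr_dec[OF lr23 p3 d3])
    have p2: "0 < coeff H2 k" using ppos_pos[OF pH2] True dH2 by simp
    have d1: "coeff H1 (Suc k) \<le> coeff H1 k" by (rule lr_dec[OF lr12u p2 d2])
    have p1: "0 < coeff H1 k" using ppos_pos[OF pH1] True dH1 by simp
    show ?thesis by (rule lr_dec[OF lrA1 p1 d1])
  next
    case False
    hence "coeff A (Suc k) = 0" using dA by (intro coeff_eq_0) simp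
    thus ?thesis using ppos_nonneg[OF ppA(1)] by simp
  qed
  have Anv: "coeff A (Suc J) \<le> coeff A J" if lt: "coeff A J < coeff A (J - 1)"
  proof -
    have "0 < coeff A (J - 1)" using lt ppos_nonneg[OF ppA(1), of J] by linarith
    moreover have "coeff A (Suc (J - 1)) \<le> coeff A (J - 1)" using lt JF(1) by simp
    ultimately show ?thesis using pf2_dec_after[OF ppA(2), of "J - 1" J] JF(1) by simp
  qed
  have pBp: "ppos Bp" "pf2 Bp" unfolding Bp_def
    by (rule ppos_mult[OF lin13(1) ppa(1)], rule pf2_mult[OF lin13(2) ppa(2)])
  have dBp: "degree Bp = s + 3"
  proof -
    have a: "degree Bp = degree ([:1,3:] :: real poly) + degree (pa^(s+2))" unfolding Bp_def by (rule ppos_deg[OF lin13(1) ppa(1)])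
    have b: "degree (pa^(s+2)) = s+2" by (rule degree_pa_pow)
    have c: "degree ([:1,3:] :: real poly) = 1" by simp
    show ?thesis using a b c by linarith
  qed
  have cB: "coeff B k = (if k = 0 then 0 else coeff Bp (k - 1))" for k unfolding B_def by (rule coeff_pt_mult)
  have bi: "coeff Bp (J-2) \<le> coeff Bp (Suc (J-2))" unfolding Bp_def
    by (rule beta_inc) (use JF in auto)
  have bd: "coeff Bp (Suc (J-1)) \<le> coeff Bp (J-1)" unfolding Bp_def
    by (rule beta_dec) (use JF in auto)
  have bp1: "0 < coeff Bp (J-2)" using ppos_pos[OF pBp(1)] dBp JF(2) by simp
  have bp2: "0 < coeff Bp (J-1)" using ppos_pos[OF pBp(1)] dBp JF(2) by simp
  have Binc: "coeff B k \<le> coeff B (Suc k)" if "k < J" for k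
  proof (cases k)
    case 0 thus ?thesis using cB ppos_nonneg[OF pBp(1)] by simp
  next
    case (Suc k')
    have "k' \<le> J - 2" using that Suc by simp
    from pf2_inc_before[OF pBp(2) bp1 bi this] show ?thesis unfolding cB Suc by simp
  qed
  have Bdec: "coeff B (Suc k) \<le> coeff B k" if Jk: "J \<le> k" for k
  proof -
    obtain k' where Suc: "k = Suc k'" using Jk JF(1) by (cases k) auto
    have "J - 1 \<le> k'" using that Suc by simp
    from pf2_dec_after[OF pBp(2) bp2 bd this] show ?thesis unfolding cB Suc by simp
  qed
  obtain j where j: "\<forall>i<j. coeff A i + coeff B i \<le> coeff A (Suc i) + coeff B (Suc i)"
    "\<forall>i. j \<le> i \<longrightarrow> coeff A (Suc i) + coeff B (Suc i) \<le> coeff A i + coeff B i"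
    using combine_unimodal[of J "coeff A" "coeff B"] JF(1) Ainc Adec Anv Binc Bdec by auto
  define c where "c i = coeff (A + B) i" for i
  have cn: "\<forall>i. 0 \<le> c i" unfolding c_def using ppos_nonneg[OF ppA(1)] ppos_nonneg[OF pBp(1)] cB
    by (auto intro: add_nonneg_nonneg)
  have "\<exists>j'. (\<forall>i<j'. (\<lambda>i. c i + (if i = 0 then 0 else c (i - 1))) i \<le> (\<lambda>i. c i + (if i = 0 then 0 else c (i - 1))) (Suc i)) \<and>
       (\<forall>i. j' \<le> i \<longrightarrow> (\<lambda>i. c i + (if i = 0 then 0 else c (i - 1))) (Suc i) \<le> (\<lambda>i. c i + (if i = 0 then 0 else c (i - 1))) i)"
    by (rule pb_mult_unimodal[of j c]) (use j cn in \<open>auto simp: c_def\<close>)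
  moreover have "coeff (Ipol m n) i = c i + (if i = 0 then 0 else c (i - 1))" for i
  proof -
    have IP: "Ipol m n = [:1,1:] * (A + B)" unfolding Ipol_def A_def B_def Bp_def s_def pb_def by simp
    show ?thesis unfolding IP coeff_lin_mult c_def by simp
  qed
  ultimately show ?thesis by simp
qed


lemma coeff_rp: "coeff (map_poly real p) k = real (coeff p k)"
  by (simp add: coeff_map_poly)

lemma rp_add: "map_poly real (p + q) = map_poly real p + map_poly real q"
  by (rule poly_eqI) (simp add: coeff_map_poly)

lemma rp_mult: "map_poly real (p * q) = map_poly real p * map_poly real q"
  by (rule poly_eqI) (simp add: coeff_map_poly coeff_mult)

lemma rp_power: "map_poly real (p ^ k) = map_poly real p ^ k"
  by (induction k) (simp_all add: rp_mult)

lemma rp_pCons: "map_poly real (pCons a p) = pCons (real a) (map_poly real p)"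
  by (rule map_poly_pCons) simp

lemma rp_NI: "map_poly real (NI m n) = Ipol m n"
proof -
  have h1: "pa^2 * [:1,4,3:] + pt * (pb^2 * [:1,3,1:]) = pb * R0"
    unfolding pa_def pb_def pt_def R0_def by (simp add: power2_eq_square)
  have h2: "([:1,4,3:] :: real poly) = pb * [:1,3:]" unfolding pb_def by simp
  have "map_poly real (NI m n) = (pa^2 * [:1,4,3:] + pt * (pb^2 * [:1,3,1:])) * U m * U n
      + pt * (pa^2 * [:1,4,3:] * pa^m * pa^n)"
    unfolding NI_def U_def pa_def pb_def pt_def by (simp only: rp_add rp_mult rp_power rp_pCons map_poly_0) simp
  also have "\<dots> = pb * R0 * U m * U n + pt * (pa^2 * (pb * [:1,3:]) * pa^m * pa^n)"
    by (simp only: h1) (simp only: h2)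
  also have "\<dots> = Ipol m n" unfolding Ipol_def by (simp add: power_add algebra_simps power2_eq_square)
  finally show ?thesis .
qed

theorem mainTheorem2:
  fixes m n :: nat
  assumes "m \<ge> 1" and "n \<ge> 1"
  shows "unimodal (indep_poly (T3star_verts m n) (T3star_edges m n))"
proof -
  obtain j where j: "\<forall>i<j. coeff (Ipol m n) i \<le> coeff (Ipol m n) (Suc i)"
    "\<forall>i. j \<le> i \<longrightarrow> coeff (Ipol m n) (Suc i) \<le> coeff (Ipol m n) i"
    using real_unimodal assms by blast
  have c: "coeff (Ipol m n) k = real (coeff (NI m n) k)" for k
    unfolding rp_NI[symmetric] coeff_rp ..
  show ?thesis unfolding comb_main unimodal_def
  proof (rule exI[of _ j], intro conjI allI impI)
    fix i assume "i < j"
    thus "coeff (NI m n) i \<le> coeff (NI m n) (Suc i)" using j(1) unfolding c by simp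
  next
    fix i assume "j \<le> i \<and> i < degree (NI m n)"
    thus "coeff (NI m n) (Suc i) \<le> coeff (NI m n) i" using j(2) unfolding c by simp
  qed
qed


end
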